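(* Let $F\colon\mathcal{B}\to\mathcal{C}$ be a lax functor of bicategories and $u\colon X\to Y$ a 1-cell in $\mathcal{C}$. Then the assignment $F\downarrow u\colon F\downarrow X\to F\downarrow Y$ given on objects by $(A,f_A)\mapsto(A,uf_A)$, on 1-cells by $(p,\theta)\mapsto(p,a^{-1}\circ(1_u*\theta))$ (with $a$ the associator of $\mathcal{C}$), and on 2-cells by $\alpha\mapsto\alpha$, is a strict functor of bicategories.
   Context: A strict functor is a lax functor whose lax constraints are identities. Lax slice $F\downarrow X$: objects $(A,f_A)$ with $A\in\mathcal{B}$, $f_A\colon FA\to X$ in $\mathcal{C}$; 1-cells $(p,\theta)\colon(A_0,f_0)\to(A_1,f_1)$ with $p\colon A_0\to A_1$ in $\mathcal{B}$ and $\theta\colon f_0\Rightarrow f_1\circ Fp$; 2-cells $\alpha\colon p_0\Rightarrow p_1$ in $\mathcal{B}$ with $(1_{f_1}*F\alpha)\circ\theta_0=\theta_1$. Identity 1-cell of $(A,f_A)$: $(1_A,(1_{f_A}*F^0_A)\circ r^{-1}_{f_A})$ where $F^0_A\colon 1_{FA}\Rightarrow F1_A$; composite of $(p_0,\theta_0)$ and $(p_1,\theta_1)$ is $(p_1p_0,(1_{f_2}*F^2_{p_1,p_0})\circ a\circ(\theta_1*1_{Fp_0})\circ\theta_0)$ with $F^2_{g,f}\colon Fg\circ Ff\Rightarrow F(gf)$; 2-cell compositions, associator and unitors come from $\mathcal{B}$. *)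

theory Defs
  imports Main
begin

text \<open>A bicategory is presented by a set of objects, a set of 1-cells with source and
target, a set of 2-cells with domain and codomain 1-cells, identity 1-cells,
horizontal composition of 1-cells (written g f for g after f), identity 2-cells,
vertical composition (beta after alpha), horizontal composition of 2-cells,
associator a(h,g,f) : (h g) f => h (g f), left unitor l(f) : 1 f => f and
right unitor r(f) : f 1 => f.  Operations are total functions; only their values
on well-typed arguments matter.\<close>

record ('o, 'a, 'c) bicat =
  bob     :: "'o set"
  bhom    :: "'a set"
  bsrc    :: "'a \<Rightarrow> 'o"
  btrg    :: "'a \<Rightarrow> 'o"
  bcell   :: "'c set"
  bdom    :: "'c \<Rightarrow> 'a"
  bcod    :: "'c \<Rightarrow> 'a"
  bid1    :: "'o \<Rightarrow> 'a"
  bcomp1  :: "'a \<Rightarrow> 'a \<Rightarrow> 'a"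
  bid2    :: "'a \<Rightarrow> 'c"
  bvcomp  :: "'c \<Rightarrow> 'c \<Rightarrow> 'c"
  bhcomp  :: "'c \<Rightarrow> 'c \<Rightarrow> 'c"
  bassoc  :: "'a \<Rightarrow> 'a \<Rightarrow> 'a \<Rightarrow> 'c"
  blunit  :: "'a \<Rightarrow> 'c"
  brunit  :: "'a \<Rightarrow> 'c"

definition composable :: "('o, 'a, 'c, 'x) bicat_scheme \<Rightarrow> 'a \<Rightarrow> 'a \<Rightarrow> bool" where
  "composable B g f \<longleftrightarrow> f \<in> bhom B \<and> g \<in> bhom B \<and> bsrc B g = btrg B f"

definition cell_in :: "('o, 'a, 'c, 'x) bicat_scheme \<Rightarrow> 'c \<Rightarrow> 'a \<Rightarrow> 'a \<Rightarrow> bool" where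
  "cell_in B \<alpha> f g \<longleftrightarrow> \<alpha> \<in> bcell B \<and> bdom B \<alpha> = f \<and> bcod B \<alpha> = g"

definition is_inverse2 :: "('o, 'a, 'c, 'x) bicat_scheme \<Rightarrow> 'c \<Rightarrow> 'c \<Rightarrow> bool" where
  "is_inverse2 B \<alpha> \<beta> \<longleftrightarrow> \<alpha> \<in> bcell B \<and> \<beta> \<in> bcell B \<and>
     bdom B \<beta> = bcod B \<alpha> \<and> bcod B \<beta> = bdom B \<alpha> \<and>
     bvcomp B \<beta> \<alpha> = bid2 B (bdom B \<alpha>) \<and> bvcomp B \<alpha> \<beta> = bid2 B (bcod B \<alpha>)"

definition iso2 :: "('o, 'a, 'c, 'x) bicat_scheme \<Rightarrow> 'c \<Rightarrow> bool" where
  "iso2 B \<alpha> \<longleftrightarrow> (\<exists>\<beta>. is_inverse2 B \<alpha> \<beta>)"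

definition inv2 :: "('o, 'a, 'c, 'x) bicat_scheme \<Rightarrow> 'c \<Rightarrow> 'c" where
  "inv2 B \<alpha> = (THE \<beta>. is_inverse2 B \<alpha> \<beta>)"

definition bicategory :: "('o, 'a, 'c, 'x) bicat_scheme \<Rightarrow> bool" where
  "bicategory B \<longleftrightarrow>
    (\<forall>X\<in>bob B. bid1 B X \<in> bhom B \<and> bsrc B (bid1 B X) = X \<and> btrg B (bid1 B X) = X) \<and>
    (\<forall>f\<in>bhom B. bsrc B f \<in> bob B \<and> btrg B f \<in> bob B) \<and>
    (\<forall>g f. composable B g f \<longrightarrow> bcomp1 B g f \<in> bhom B \<and>
        bsrc B (bcomp1 B g f) = bsrc B f \<and> btrg B (bcomp1 B g f) = btrg B g) \<and>
    (\<forall>\<alpha>\<in>bcell B. bdom B \<alpha> \<in> bhom B \<and> bcod B \<alpha> \<in> bhom B \<and>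
        bsrc B (bdom B \<alpha>) = bsrc B (bcod B \<alpha>) \<and> btrg B (bdom B \<alpha>) = btrg B (bcod B \<alpha>)) \<and>
    (\<forall>f\<in>bhom B. cell_in B (bid2 B f) f f) \<and>
    (\<forall>\<alpha> \<beta>. \<alpha> \<in> bcell B \<and> \<beta> \<in> bcell B \<and> bcod B \<alpha> = bdom B \<beta> \<longrightarrow>
        cell_in B (bvcomp B \<beta> \<alpha>) (bdom B \<alpha>) (bcod B \<beta>)) \<and>
    (\<forall>\<alpha>\<in>bcell B. bvcomp B (bid2 B (bcod B \<alpha>)) \<alpha> = \<alpha> \<and> bvcomp B \<alpha> (bid2 B (bdom B \<alpha>)) = \<alpha>) \<and>
    (\<forall>\<alpha> \<beta> \<gamma>. \<alpha> \<in> bcell B \<and> \<beta> \<in> bcell B \<and> \<gamma> \<in> bcell B \<and>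
        bcod B \<alpha> = bdom B \<beta> \<and> bcod B \<beta> = bdom B \<gamma> \<longrightarrow>
        bvcomp B \<gamma> (bvcomp B \<beta> \<alpha>) = bvcomp B (bvcomp B \<gamma> \<beta>) \<alpha>) \<and>
    (\<forall>\<alpha> \<beta>. \<alpha> \<in> bcell B \<and> \<beta> \<in> bcell B \<and> bsrc B (bdom B \<beta>) = btrg B (bdom B \<alpha>) \<longrightarrow>
        cell_in B (bhcomp B \<beta> \<alpha>) (bcomp1 B (bdom B \<beta>) (bdom B \<alpha>))
                                 (bcomp1 B (bcod B \<beta>) (bcod B \<alpha>))) \<and>
    (\<forall>g f. composable B g f \<longrightarrow> bhcomp B (bid2 B g) (bid2 B f) = bid2 B (bcomp1 B g f)) \<and>
    (\<forall>\<alpha> \<alpha>' \<beta> \<beta>'. \<alpha> \<in> bcell B \<and> \<alpha>' \<in> bcell B \<and> \<beta> \<in> bcell B \<and> \<beta>' \<in> bcell B \<and>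
        bcod B \<alpha> = bdom B \<alpha>' \<and> bcod B \<beta> = bdom B \<beta>' \<and>
        bsrc B (bdom B \<beta>) = btrg B (bdom B \<alpha>) \<longrightarrow>
        bhcomp B (bvcomp B \<beta>' \<beta>) (bvcomp B \<alpha>' \<alpha>) = bvcomp B (bhcomp B \<beta>' \<alpha>') (bhcomp B \<beta> \<alpha>)) \<and>
    (\<forall>h g f. composable B h g \<and> composable B g f \<longrightarrow>
        cell_in B (bassoc B h g f) (bcomp1 B (bcomp1 B h g) f) (bcomp1 B h (bcomp1 B g f)) \<and>
        iso2 B (bassoc B h g f)) \<and>
    (\<forall>f\<in>bhom B.
        cell_in B (blunit B f) (bcomp1 B (bid1 B (btrg B f)) f) f \<and> iso2 B (blunit B f) \<and>
        cell_in B (brunit B f) (bcomp1 B f (bid1 B (bsrc B f))) f \<and> iso2 B (brunit B f)) \<and>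
    (\<forall>\<alpha> \<beta> \<gamma>. \<alpha> \<in> bcell B \<and> \<beta> \<in> bcell B \<and> \<gamma> \<in> bcell B \<and>
        bsrc B (bdom B \<gamma>) = btrg B (bdom B \<beta>) \<and> bsrc B (bdom B \<beta>) = btrg B (bdom B \<alpha>) \<longrightarrow>
        bvcomp B (bassoc B (bcod B \<gamma>) (bcod B \<beta>) (bcod B \<alpha>)) (bhcomp B (bhcomp B \<gamma> \<beta>) \<alpha>) =
        bvcomp B (bhcomp B \<gamma> (bhcomp B \<beta> \<alpha>)) (bassoc B (bdom B \<gamma>) (bdom B \<beta>) (bdom B \<alpha>))) \<and>
    (\<forall>\<alpha>\<in>bcell B.
        bvcomp B (blunit B (bcod B \<alpha>)) (bhcomp B (bid2 B (bid1 B (btrg B (bdom B \<alpha>)))) \<alpha>) =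
        bvcomp B \<alpha> (blunit B (bdom B \<alpha>)) \<and>
        bvcomp B (brunit B (bcod B \<alpha>)) (bhcomp B \<alpha> (bid2 B (bid1 B (bsrc B (bdom B \<alpha>))))) =
        bvcomp B \<alpha> (brunit B (bdom B \<alpha>))) \<and>
    (\<forall>k h g f. composable B k h \<and> composable B h g \<and> composable B g f \<longrightarrow>
        bvcomp B (bhcomp B (bid2 B k) (bassoc B h g f))
          (bvcomp B (bassoc B k (bcomp1 B h g) f) (bhcomp B (bassoc B k h g) (bid2 B f))) =
        bvcomp B (bassoc B k h (bcomp1 B g f)) (bassoc B (bcomp1 B k h) g f)) \<and>
    (\<forall>g f. composable B g f \<longrightarrow>
        bvcomp B (bhcomp B (bid2 B g) (blunit B f)) (bassoc B g (bid1 B (bsrc B g)) f) =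
        bhcomp B (brunit B g) (bid2 B f))"

text \<open>A lax functor consists of maps on objects, 1-cells and 2-cells together with
lax constraints fcomp g f = F2(g,f) : Fg Ff => F(gf) and funit A = F0(A) : 1_(FA) => F(1_A).\<close>

record ('o, 'a, 'c, 'o2, 'a2, 'c2) laxf =
  fobj  :: "'o \<Rightarrow> 'o2"
  fmor  :: "'a \<Rightarrow> 'a2"
  fcell :: "'c \<Rightarrow> 'c2"
  fcomp :: "'a \<Rightarrow> 'a \<Rightarrow> 'c2"
  funit :: "'o \<Rightarrow> 'c2"

definition lax_functor ::
  "('o, 'a, 'c, 'x) bicat_scheme \<Rightarrow> ('o2, 'a2, 'c2, 'y) bicat_scheme \<Rightarrow>
   ('o, 'a, 'c, 'o2, 'a2, 'c2, 'z) laxf_scheme \<Rightarrow> bool" where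
  "lax_functor B C F \<longleftrightarrow>
    (\<forall>A\<in>bob B. fobj F A \<in> bob C) \<and>
    (\<forall>f\<in>bhom B. fmor F f \<in> bhom C \<and> bsrc C (fmor F f) = fobj F (bsrc B f) \<and>
        btrg C (fmor F f) = fobj F (btrg B f)) \<and>
    (\<forall>\<alpha>\<in>bcell B. cell_in C (fcell F \<alpha>) (fmor F (bdom B \<alpha>)) (fmor F (bcod B \<alpha>))) \<and>
    (\<forall>f\<in>bhom B. fcell F (bid2 B f) = bid2 C (fmor F f)) \<and>
    (\<forall>\<alpha> \<beta>. \<alpha> \<in> bcell B \<and> \<beta> \<in> bcell B \<and> bcod B \<alpha> = bdom B \<beta> \<longrightarrow>
        fcell F (bvcomp B \<beta> \<alpha>) = bvcomp C (fcell F \<beta>) (fcell F \<alpha>)) \<and>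
    (\<forall>A\<in>bob B. cell_in C (funit F A) (bid1 C (fobj F A)) (fmor F (bid1 B A))) \<and>
    (\<forall>g f. composable B g f \<longrightarrow>
        cell_in C (fcomp F g f) (bcomp1 C (fmor F g) (fmor F f)) (fmor F (bcomp1 B g f))) \<and>
    (\<forall>\<alpha> \<beta>. \<alpha> \<in> bcell B \<and> \<beta> \<in> bcell B \<and> bsrc B (bdom B \<beta>) = btrg B (bdom B \<alpha>) \<longrightarrow>
        bvcomp C (fcell F (bhcomp B \<beta> \<alpha>)) (fcomp F (bdom B \<beta>) (bdom B \<alpha>)) =
        bvcomp C (fcomp F (bcod B \<beta>) (bcod B \<alpha>)) (bhcomp C (fcell F \<beta>) (fcell F \<alpha>))) \<and>
    (\<forall>h g f. composable B h g \<and> composable B g f \<longrightarrow>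
        bvcomp C (fcell F (bassoc B h g f))
          (bvcomp C (fcomp F (bcomp1 B h g) f) (bhcomp C (fcomp F h g) (bid2 C (fmor F f)))) =
        bvcomp C (fcomp F h (bcomp1 B g f))
          (bvcomp C (bhcomp C (bid2 C (fmor F h)) (fcomp F g f))
             (bassoc C (fmor F h) (fmor F g) (fmor F f)))) \<and>
    (\<forall>f\<in>bhom B.
        blunit C (fmor F f) =
          bvcomp C (fcell F (blunit B f))
            (bvcomp C (fcomp F (bid1 B (btrg B f)) f) (bhcomp C (funit F (btrg B f)) (bid2 C (fmor F f)))) \<and>
        brunit C (fmor F f) =
          bvcomp C (fcell F (brunit B f))
            (bvcomp C (fcomp F f (bid1 B (bsrc B f))) (bhcomp C (bid2 C (fmor F f)) (funit F (bsrc B f)))))"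

definition strict_functor ::
  "('o, 'a, 'c, 'x) bicat_scheme \<Rightarrow> ('o2, 'a2, 'c2, 'y) bicat_scheme \<Rightarrow>
   ('o, 'a, 'c, 'o2, 'a2, 'c2, 'z) laxf_scheme \<Rightarrow> bool" where
  "strict_functor B C F \<longleftrightarrow> lax_functor B C F \<and>
    (\<forall>g f. composable B g f \<longrightarrow> fcomp F g f = bid2 C (bcomp1 C (fmor F g) (fmor F f))) \<and>
    (\<forall>A\<in>bob B. funit F A = bid2 C (bid1 C (fobj F A)))"

text \<open>A 1-cell (p,theta) : (A0,f0) -> (A1,f1) is
recorded together with its source and target object as ((A0,f0),(A1,f1),p,theta).
A 2-cell alpha : (p0,theta0) => (p1,theta1) is recorded with its source and target
1-cells as (P0, P1, alpha).\<close>

type_synonym ('o, 'a2) sl_obj = "'o \<times> 'a2"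
type_synonym ('o, 'a, 'a2, 'c2) sl_mor = "('o \<times> 'a2) \<times> ('o \<times> 'a2) \<times> 'a \<times> 'c2"
type_synonym ('o, 'a, 'c, 'a2, 'c2) sl_cell =
  "(('o \<times> 'a2) \<times> ('o \<times> 'a2) \<times> 'a \<times> 'c2) \<times> (('o \<times> 'a2) \<times> ('o \<times> 'a2) \<times> 'a \<times> 'c2) \<times> 'c"

definition sl_src :: "('o, 'a, 'a2, 'c2) sl_mor \<Rightarrow> ('o, 'a2) sl_obj" where
  "sl_src P = fst P"
definition sl_trg :: "('o, 'a, 'a2, 'c2) sl_mor \<Rightarrow> ('o, 'a2) sl_obj" where
  "sl_trg P = fst (snd P)"
definition sl_p :: "('o, 'a, 'a2, 'c2) sl_mor \<Rightarrow> 'a" where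
  "sl_p P = fst (snd (snd P))"
definition sl_theta :: "('o, 'a, 'a2, 'c2) sl_mor \<Rightarrow> 'c2" where
  "sl_theta P = snd (snd (snd P))"

definition sl_obs ::
  "('o, 'a, 'c, 'x) bicat_scheme \<Rightarrow> ('o2, 'a2, 'c2, 'y) bicat_scheme \<Rightarrow>
   ('o, 'a, 'c, 'o2, 'a2, 'c2, 'z) laxf_scheme \<Rightarrow> 'o2 \<Rightarrow> ('o, 'a2) sl_obj set" where
  "sl_obs B C F X = {(A, f). A \<in> bob B \<and> f \<in> bhom C \<and> bsrc C f = fobj F A \<and> btrg C f = X}"

definition sl_homs ::
  "('o, 'a, 'c, 'x) bicat_scheme \<Rightarrow> ('o2, 'a2, 'c2, 'y) bicat_scheme \<Rightarrow>
   ('o, 'a, 'c, 'o2, 'a2, 'c2, 'z) laxf_scheme \<Rightarrow> 'o2 \<Rightarrow> ('o, 'a, 'a2, 'c2) sl_mor set" where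
  "sl_homs B C F X = {((A0, f0), (A1, f1), p, \<theta>).
      (A0, f0) \<in> sl_obs B C F X \<and> (A1, f1) \<in> sl_obs B C F X \<and>
      p \<in> bhom B \<and> bsrc B p = A0 \<and> btrg B p = A1 \<and>
      cell_in C \<theta> f0 (bcomp1 C f1 (fmor F p))}"

definition sl_cells ::
  "('o, 'a, 'c, 'x) bicat_scheme \<Rightarrow> ('o2, 'a2, 'c2, 'y) bicat_scheme \<Rightarrow>
   ('o, 'a, 'c, 'o2, 'a2, 'c2, 'z) laxf_scheme \<Rightarrow> 'o2 \<Rightarrow> ('o, 'a, 'c, 'a2, 'c2) sl_cell set" where
  "sl_cells B C F X = {(P0, P1, \<alpha>).
      P0 \<in> sl_homs B C F X \<and> P1 \<in> sl_homs B C F X \<and>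
      sl_src P0 = sl_src P1 \<and> sl_trg P0 = sl_trg P1 \<and>
      cell_in B \<alpha> (sl_p P0) (sl_p P1) \<and>
      bvcomp C (bhcomp C (bid2 C (snd (sl_trg P1))) (fcell F \<alpha>)) (sl_theta P0) = sl_theta P1}"

definition sl_id1 ::
  "('o2, 'a2, 'c2, 'y) bicat_scheme \<Rightarrow> ('o, 'a, 'c, 'x) bicat_scheme \<Rightarrow>
   ('o, 'a, 'c, 'o2, 'a2, 'c2, 'z) laxf_scheme \<Rightarrow> ('o, 'a2) sl_obj \<Rightarrow> ('o, 'a, 'a2, 'c2) sl_mor" where
  "sl_id1 C B F Af = (case Af of (A, f) \<Rightarrow> ((A, f), (A, f), bid1 B A,
      bvcomp C (bhcomp C (bid2 C f) (funit F A)) (inv2 C (brunit C f))))"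

definition sl_comp1 ::
  "('o, 'a, 'c, 'x) bicat_scheme \<Rightarrow> ('o2, 'a2, 'c2, 'y) bicat_scheme \<Rightarrow>
   ('o, 'a, 'c, 'o2, 'a2, 'c2, 'z) laxf_scheme \<Rightarrow>
   ('o, 'a, 'a2, 'c2) sl_mor \<Rightarrow> ('o, 'a, 'a2, 'c2) sl_mor \<Rightarrow> ('o, 'a, 'a2, 'c2) sl_mor" where
  "sl_comp1 B C F P1 P0 = (sl_src P0, sl_trg P1, bcomp1 B (sl_p P1) (sl_p P0),
      bvcomp C (bhcomp C (bid2 C (snd (sl_trg P1))) (fcomp F (sl_p P1) (sl_p P0)))
       (bvcomp C (bassoc C (snd (sl_trg P1)) (fmor F (sl_p P1)) (fmor F (sl_p P0)))
         (bvcomp C (bhcomp C (sl_theta P1) (bid2 C (fmor F (sl_p P0)))) (sl_theta P0))))"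

definition lax_slice ::
  "('o, 'a, 'c, 'x) bicat_scheme \<Rightarrow> ('o2, 'a2, 'c2, 'y) bicat_scheme \<Rightarrow>
   ('o, 'a, 'c, 'o2, 'a2, 'c2, 'z) laxf_scheme \<Rightarrow> 'o2 \<Rightarrow>
   (('o, 'a2) sl_obj, ('o, 'a, 'a2, 'c2) sl_mor, ('o, 'a, 'c, 'a2, 'c2) sl_cell) bicat" where
  "lax_slice B C F X =
    \<lparr> bob = sl_obs B C F X,
      bhom = sl_homs B C F X,
      bsrc = sl_src,
      btrg = sl_trg,
      bcell = sl_cells B C F X,
      bdom = (\<lambda>(P0, P1, \<alpha>). P0),
      bcod = (\<lambda>(P0, P1, \<alpha>). P1),
      bid1 = sl_id1 C B F,
      bcomp1 = sl_comp1 B C F,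
      bid2 = (\<lambda>P. (P, P, bid2 B (sl_p P))),
      bvcomp = (\<lambda>(Q0, Q1, \<beta>) (P0, P1, \<alpha>). (P0, Q1, bvcomp B \<beta> \<alpha>)),
      bhcomp = (\<lambda>(Q0, Q1, \<beta>) (P0, P1, \<alpha>).
                 (sl_comp1 B C F Q0 P0, sl_comp1 B C F Q1 P1, bhcomp B \<beta> \<alpha>)),
      bassoc = (\<lambda>H G P. (sl_comp1 B C F (sl_comp1 B C F H G) P, sl_comp1 B C F H (sl_comp1 B C F G P),
                 bassoc B (sl_p H) (sl_p G) (sl_p P))),
      blunit = (\<lambda>P. (sl_comp1 B C F (sl_id1 C B F (sl_trg P)) P, P, blunit B (sl_p P))),
      brunit = (\<lambda>P. (sl_comp1 B C F P (sl_id1 C B F (sl_src P)), P, brunit B (sl_p P))) \<rparr>"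

definition sl_map_obj :: "('o2, 'a2, 'c2, 'y) bicat_scheme \<Rightarrow> 'a2 \<Rightarrow> ('o, 'a2) sl_obj \<Rightarrow> ('o, 'a2) sl_obj" where
  "sl_map_obj C u Af = (case Af of (A, f) \<Rightarrow> (A, bcomp1 C u f))"

definition sl_map_mor ::
  "('o2, 'a2, 'c2, 'y) bicat_scheme \<Rightarrow> ('o, 'a, 'c, 'o2, 'a2, 'c2, 'z) laxf_scheme \<Rightarrow> 'a2 \<Rightarrow>
   ('o, 'a, 'a2, 'c2) sl_mor \<Rightarrow> ('o, 'a, 'a2, 'c2) sl_mor" where
  "sl_map_mor C F u P = (sl_map_obj C u (sl_src P), sl_map_obj C u (sl_trg P), sl_p P,
      bvcomp C (inv2 C (bassoc C u (snd (sl_trg P)) (fmor F (sl_p P))))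
               (bhcomp C (bid2 C u) (sl_theta P)))"

definition slice_functor ::
  "('o, 'a, 'c, 'x) bicat_scheme \<Rightarrow> ('o2, 'a2, 'c2, 'y) bicat_scheme \<Rightarrow>
   ('o, 'a, 'c, 'o2, 'a2, 'c2, 'z) laxf_scheme \<Rightarrow> 'o2 \<Rightarrow> 'a2 \<Rightarrow>
   (('o, 'a2) sl_obj, ('o, 'a, 'a2, 'c2) sl_mor, ('o, 'a, 'c, 'a2, 'c2) sl_cell,
    ('o, 'a2) sl_obj, ('o, 'a, 'a2, 'c2) sl_mor, ('o, 'a, 'c, 'a2, 'c2) sl_cell) laxf" where
  "slice_functor B C F Y u =
    \<lparr> fobj = sl_map_obj C u,
      fmor = sl_map_mor C F u,
      fcell = (\<lambda>(P0, P1, \<alpha>). (sl_map_mor C F u P0, sl_map_mor C F u P1, \<alpha>)),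
      fcomp = (\<lambda>G P. bid2 (lax_slice B C F Y)
                 (bcomp1 (lax_slice B C F Y) (sl_map_mor C F u G) (sl_map_mor C F u P))),
      funit = (\<lambda>Af. bid2 (lax_slice B C F Y) (bid1 (lax_slice B C F Y) (sl_map_obj C u Af))) \<rparr>"

end

theory Submission
  imports Defs
begin

locale bc =
  fixes C :: "('o, 'a, 'c, 'x) bicat_scheme"
  assumes bic: "bicategory C"
begin

abbreviation V where "V \<equiv> bvcomp C"
abbreviation H where "H \<equiv> bhcomp C"
abbreviation I where "I \<equiv> bid2 C"
abbreviation c where "c \<equiv> bcomp1 C"
abbreviation a where "a \<equiv> bassoc C"
abbreviation ai where "ai h g f \<equiv> inv2 C (bassoc C h g f)"
abbreviation r where "r \<equiv> brunit C"
abbreviation ri where "ri f \<equiv> inv2 C (brunit C f)"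
abbreviation l where "l \<equiv> blunit C"
abbreviation hom where "hom \<equiv> bhom C"
abbreviation cell where "cell \<equiv> bcell C"
abbreviation src where "src \<equiv> bsrc C"
abbreviation trg where "trg \<equiv> btrg C"
abbreviation dom where "dom \<equiv> bdom C"
abbreviation cod where "cod \<equiv> bcod C"


lemma ax_id1: "\<forall>X\<in>bob C. bid1 C X \<in> bhom C \<and> bsrc C (bid1 C X) = X \<and> btrg C (bid1 C X) = X"
  using bic unfolding bicategory_def by (elim conjE) assumption
lemma ax_hom: "\<forall>f\<in>bhom C. bsrc C f \<in> bob C \<and> btrg C f \<in> bob C"
  using bic unfolding bicategory_def by (elim conjE) assumption
lemma ax_comp: "\<forall>g f. composable C g f \<longrightarrow> bcomp1 C g f \<in> bhom C \<and>
        bsrc C (bcomp1 C g f) = bsrc C f \<and> btrg C (bcomp1 C g f) = btrg C g"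
  using bic unfolding bicategory_def by (elim conjE) assumption
lemma ax_cell: "\<forall>\<alpha>\<in>bcell C. bdom C \<alpha> \<in> bhom C \<and> bcod C \<alpha> \<in> bhom C \<and>
        bsrc C (bdom C \<alpha>) = bsrc C (bcod C \<alpha>) \<and> btrg C (bdom C \<alpha>) = btrg C (bcod C \<alpha>)"
  using bic unfolding bicategory_def by (elim conjE) assumption
lemma ax_id2: "\<forall>f\<in>bhom C. cell_in C (bid2 C f) f f"
  using bic unfolding bicategory_def by (elim conjE) assumption
lemma ax_vcomp: "\<forall>\<alpha> \<beta>. \<alpha> \<in> bcell C \<and> \<beta> \<in> bcell C \<and> bcod C \<alpha> = bdom C \<beta> \<longrightarrow>
        cell_in C (bvcomp C \<beta> \<alpha>) (bdom C \<alpha>) (bcod C \<beta>)"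
  using bic unfolding bicategory_def by (elim conjE) assumption
lemma ax_vid: "\<forall>\<alpha>\<in>bcell C. bvcomp C (bid2 C (bcod C \<alpha>)) \<alpha> = \<alpha> \<and> bvcomp C \<alpha> (bid2 C (bdom C \<alpha>)) = \<alpha>"
  using bic unfolding bicategory_def by (elim conjE) assumption
lemma ax_vassoc: "\<forall>\<alpha> \<beta> \<gamma>. \<alpha> \<in> bcell C \<and> \<beta> \<in> bcell C \<and> \<gamma> \<in> bcell C \<and>
        bcod C \<alpha> = bdom C \<beta> \<and> bcod C \<beta> = bdom C \<gamma> \<longrightarrow>
        bvcomp C \<gamma> (bvcomp C \<beta> \<alpha>) = bvcomp C (bvcomp C \<gamma> \<beta>) \<alpha>"
  using bic unfolding bicategory_def by (elim conjE) assumption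
lemma ax_hcomp: "\<forall>\<alpha> \<beta>. \<alpha> \<in> bcell C \<and> \<beta> \<in> bcell C \<and> bsrc C (bdom C \<beta>) = btrg C (bdom C \<alpha>) \<longrightarrow>
        cell_in C (bhcomp C \<beta> \<alpha>) (bcomp1 C (bdom C \<beta>) (bdom C \<alpha>))
                                 (bcomp1 C (bcod C \<beta>) (bcod C \<alpha>))"
  using bic unfolding bicategory_def by (elim conjE) assumption
lemma ax_hid: "\<forall>g f. composable C g f \<longrightarrow> bhcomp C (bid2 C g) (bid2 C f) = bid2 C (bcomp1 C g f)"
  using bic unfolding bicategory_def by (elim conjE) assumption
lemma ax_interchange: "\<forall>\<alpha> \<alpha>' \<beta> \<beta>'. \<alpha> \<in> bcell C \<and> \<alpha>' \<in> bcell C \<and> \<beta> \<in> bcell C \<and> \<beta>' \<in> bcell C \<and>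
        bcod C \<alpha> = bdom C \<alpha>' \<and> bcod C \<beta> = bdom C \<beta>' \<and>
        bsrc C (bdom C \<beta>) = btrg C (bdom C \<alpha>) \<longrightarrow>
        bhcomp C (bvcomp C \<beta>' \<beta>) (bvcomp C \<alpha>' \<alpha>) = bvcomp C (bhcomp C \<beta>' \<alpha>') (bhcomp C \<beta> \<alpha>)"
  using bic unfolding bicategory_def by (elim conjE) assumption
lemma ax_assoc: "\<forall>h g f. composable C h g \<and> composable C g f \<longrightarrow>
        cell_in C (bassoc C h g f) (bcomp1 C (bcomp1 C h g) f) (bcomp1 C h (bcomp1 C g f)) \<and>
        iso2 C (bassoc C h g f)"
  using bic unfolding bicategory_def by (elim conjE) assumption
lemma ax_unit: "\<forall>f\<in>bhom C.
        cell_in C (blunit C f) (bcomp1 C (bid1 C (btrg C f)) f) f \<and> iso2 C (blunit C f) \<and>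
        cell_in C (brunit C f) (bcomp1 C f (bid1 C (bsrc C f))) f \<and> iso2 C (brunit C f)"
  using bic unfolding bicategory_def by (elim conjE) assumption
lemma ax_anat: "\<forall>\<alpha> \<beta> \<gamma>. \<alpha> \<in> bcell C \<and> \<beta> \<in> bcell C \<and> \<gamma> \<in> bcell C \<and>
        bsrc C (bdom C \<gamma>) = btrg C (bdom C \<beta>) \<and> bsrc C (bdom C \<beta>) = btrg C (bdom C \<alpha>) \<longrightarrow>
        bvcomp C (bassoc C (bcod C \<gamma>) (bcod C \<beta>) (bcod C \<alpha>)) (bhcomp C (bhcomp C \<gamma> \<beta>) \<alpha>) =
        bvcomp C (bhcomp C \<gamma> (bhcomp C \<beta> \<alpha>)) (bassoc C (bdom C \<gamma>) (bdom C \<beta>) (bdom C \<alpha>))"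
  using bic unfolding bicategory_def by (elim conjE) assumption
lemma ax_unat: "\<forall>\<alpha>\<in>bcell C.
        bvcomp C (blunit C (bcod C \<alpha>)) (bhcomp C (bid2 C (bid1 C (btrg C (bdom C \<alpha>)))) \<alpha>) =
        bvcomp C \<alpha> (blunit C (bdom C \<alpha>)) \<and>
        bvcomp C (brunit C (bcod C \<alpha>)) (bhcomp C \<alpha> (bid2 C (bid1 C (bsrc C (bdom C \<alpha>))))) =
        bvcomp C \<alpha> (brunit C (bdom C \<alpha>))"
  using bic unfolding bicategory_def by (elim conjE) assumption
lemma ax_pent: "\<forall>k h g f. composable C k h \<and> composable C h g \<and> composable C g f \<longrightarrow>
        bvcomp C (bhcomp C (bid2 C k) (bassoc C h g f))
          (bvcomp C (bassoc C k (bcomp1 C h g) f) (bhcomp C (bassoc C k h g) (bid2 C f))) =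
        bvcomp C (bassoc C k h (bcomp1 C g f)) (bassoc C (bcomp1 C k h) g f)"
  using bic unfolding bicategory_def by (elim conjE) assumption
lemma ax_tri: "\<forall>g f. composable C g f \<longrightarrow>
        bvcomp C (bhcomp C (bid2 C g) (blunit C f)) (bassoc C g (bid1 C (bsrc C g)) f) =
        bhcomp C (brunit C g) (bid2 C f)"
  using bic unfolding bicategory_def by (elim conjE) assumption

lemma id1_simps[simp]: "x \<in> bob C \<Longrightarrow> bid1 C x \<in> hom"
  "x \<in> bob C \<Longrightarrow> src (bid1 C x) = x"  "x \<in> bob C \<Longrightarrow> trg (bid1 C x) = x"
  using ax_id1 ax_hom ax_cell by auto

lemma hom_ob[simp]: "f \<in> hom \<Longrightarrow> src f \<in> bob C" "f \<in> hom \<Longrightarrow> trg f \<in> bob C"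
  using ax_id1 ax_hom ax_cell by auto

lemma comp_simps[simp]:
  assumes "f \<in> hom" "g \<in> hom" "src g = trg f"
  shows "c g f \<in> hom" "src (c g f) = src f" "trg (c g f) = trg g"
  using ax_comp ax_assoc ax_unit assms unfolding composable_def cell_in_def by auto

lemma cell_simps[simp]:
  assumes "\<alpha> \<in> cell"
  shows "dom \<alpha> \<in> hom" "cod \<alpha> \<in> hom"
  using ax_cell assms by auto

lemma cell_src_trg:
  assumes "\<alpha> \<in> cell"
  shows "src (cod \<alpha>) = src (dom \<alpha>)" "trg (cod \<alpha>) = trg (dom \<alpha>)"
  using ax_cell assms by auto

lemma id2_simps[simp]:
  assumes "f \<in> hom"
  shows "I f \<in> cell" "dom (I f) = f" "cod (I f) = f"
  using ax_id2 ax_vcomp ax_hcomp assms unfolding cell_in_def by auto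

lemma vcomp_simps[simp]:
  assumes "\<alpha> \<in> cell" "\<beta> \<in> cell" "cod \<alpha> = dom \<beta>"
  shows "V \<beta> \<alpha> \<in> cell" "dom (V \<beta> \<alpha>) = dom \<alpha>" "cod (V \<beta> \<alpha>) = cod \<beta>"
  using ax_id2 ax_vcomp ax_hcomp assms unfolding cell_in_def by auto

lemma hcomp_simps[simp]:
  assumes "\<alpha> \<in> cell" "\<beta> \<in> cell" "src (dom \<beta>) = trg (dom \<alpha>)"
  shows "H \<beta> \<alpha> \<in> cell" "dom (H \<beta> \<alpha>) = c (dom \<beta>) (dom \<alpha>)"
    "cod (H \<beta> \<alpha>) = c (cod \<beta>) (cod \<alpha>)"
  using ax_id2 ax_vcomp ax_hcomp assms unfolding cell_in_def by auto

lemma hcomp_simps'[simp]: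
  assumes "\<alpha> \<in> cell" "\<beta> \<in> cell" "src (cod \<beta>) = trg (cod \<alpha>)"
  shows "H \<beta> \<alpha> \<in> cell" "dom (H \<beta> \<alpha>) = c (dom \<beta>) (dom \<alpha>)"
    "cod (H \<beta> \<alpha>) = c (cod \<beta>) (cod \<alpha>)"
  using hcomp_simps assms cell_src_trg by metis+

lemma assoc_typ:
  assumes "f \<in> hom" "g \<in> hom" "h \<in> hom" "src h = trg g" "src g = trg f"
  shows "a h g f \<in> cell \<and> dom (a h g f) = c (c h g) f \<and> cod (a h g f) = c h (c g f) \<and> iso2 C (a h g f)"
  using ax_assoc ax_unit assms unfolding cell_in_def composable_def by auto

lemma unit_typ:
  assumes "f \<in> hom"
  shows "l f \<in> cell \<and> dom (l f) = c (bid1 C (trg f)) f \<and> cod (l f) = f \<and> iso2 C (l f)"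
    "r f \<in> cell \<and> dom (r f) = c f (bid1 C (src f)) \<and> cod (r f) = f \<and> iso2 C (r f)"
  using ax_assoc ax_unit assms unfolding cell_in_def composable_def by auto

lemma inverse_unique:
  assumes "is_inverse2 C \<alpha> \<beta>" "is_inverse2 C \<alpha> \<beta>'"
  shows "\<beta> = \<beta>'"
proof -
  have ax1: "\<And>\<alpha>. \<alpha> \<in> cell \<Longrightarrow> V (I (cod \<alpha>)) \<alpha> = \<alpha> \<and> V \<alpha> (I (dom \<alpha>)) = \<alpha>"
    using ax_vid ax_vassoc by auto
  have ax2: "\<And>\<alpha> \<beta> \<gamma>. \<alpha> \<in> cell \<and> \<beta> \<in> cell \<and> \<gamma> \<in> cell \<and>
        cod \<alpha> = dom \<beta> \<and> cod \<beta> = dom \<gamma> \<Longrightarrow> V \<gamma> (V \<beta> \<alpha>) = V (V \<gamma> \<beta>) \<alpha>"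
    using ax_vid ax_vassoc by auto
  from assms have h: "\<beta> \<in> cell" "\<alpha> \<in> cell" "\<beta>' \<in> cell" "dom \<beta> = cod \<alpha>" "cod \<beta> = dom \<alpha>"
    "dom \<beta>' = cod \<alpha>" "cod \<beta>' = dom \<alpha>" "V \<beta> \<alpha> = I (dom \<alpha>)" "V \<alpha> \<beta>' = I (cod \<alpha>)"
    unfolding is_inverse2_def by auto
  have "\<beta> = V \<beta> (I (dom \<beta>))" using ax1 h by metis
  also have "\<dots> = V \<beta> (V \<alpha> \<beta>')" using h by simp
  also have "\<dots> = V (V \<beta> \<alpha>) \<beta>'" using ax2[of \<beta>' \<alpha> \<beta>] h by simp
  also have "\<dots> = V (I (cod \<beta>')) \<beta>'" using h by simp
  also have "\<dots> = \<beta>'" using ax1 h by metis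
  finally show ?thesis .
qed

lemma inv2_is_inverse: "iso2 C \<alpha> \<Longrightarrow> is_inverse2 C \<alpha> (inv2 C \<alpha>)"
  unfolding iso2_def inv2_def by (metis inverse_unique theI)

lemma inv2_props:
  assumes "iso2 C \<alpha>"
  shows "inv2 C \<alpha> \<in> cell" "dom (inv2 C \<alpha>) = cod \<alpha>" "cod (inv2 C \<alpha>) = dom \<alpha>"
    "V (inv2 C \<alpha>) \<alpha> = I (dom \<alpha>)" "V \<alpha> (inv2 C \<alpha>) = I (cod \<alpha>)" "\<alpha> \<in> cell"
  using inv2_is_inverse[OF assms] unfolding is_inverse2_def by auto

lemma assoc_simps[simp]:
  assumes "f \<in> hom" "g \<in> hom" "h \<in> hom" "src h = trg g" "src g = trg f"
  shows "a h g f \<in> cell" "dom (a h g f) = c (c h g) f" "cod (a h g f) = c h (c g f)"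
    "ai h g f \<in> cell" "dom (ai h g f) = c h (c g f)" "cod (ai h g f) = c (c h g) f"
    "V (ai h g f) (a h g f) = I (c (c h g) f)" "V (a h g f) (ai h g f) = I (c h (c g f))"
  using assoc_typ[OF assms] inv2_props by auto

lemma unit_simps[simp]:
  assumes "f \<in> hom"
  shows "l f \<in> cell" "dom (l f) = c (bid1 C (trg f)) f" "cod (l f) = f"
    "r f \<in> cell" "dom (r f) = c f (bid1 C (src f))" "cod (r f) = f"
    "ri f \<in> cell" "dom (ri f) = f" "cod (ri f) = c f (bid1 C (src f))"
    "V (ri f) (r f) = I (c f (bid1 C (src f)))" "V (r f) (ri f) = I f"
  using unit_typ[OF assms] inv2_props by auto

lemma vid_left[simp]: "\<alpha> \<in> cell \<Longrightarrow> cod \<alpha> = g \<Longrightarrow> V (I g) \<alpha> = \<alpha>"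
  using ax_vid ax_vassoc by auto
lemma vid_right[simp]: "\<alpha> \<in> cell \<Longrightarrow> dom \<alpha> = g \<Longrightarrow> V \<alpha> (I g) = \<alpha>"
  using ax_vid ax_vassoc by auto

lemma vassoc[simp]:
  assumes "\<alpha> \<in> cell" "\<beta> \<in> cell" "\<gamma> \<in> cell" "cod \<alpha> = dom \<beta>" "cod \<beta> = dom \<gamma>"
  shows "V (V \<gamma> \<beta>) \<alpha> = V \<gamma> (V \<beta> \<alpha>)"
  using ax_vassoc ax_interchange ax_anat ax_unat assms by auto

lemma hid[simp]: "f \<in> hom \<Longrightarrow> g \<in> hom \<Longrightarrow> src g = trg f \<Longrightarrow> H (I g) (I f) = I (c g f)"
  using ax_hid unfolding composable_def by auto

lemma interchange:
  assumes "\<alpha> \<in> cell" "\<alpha>' \<in> cell" "\<beta> \<in> cell" "\<beta>' \<in> cell"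
    "cod \<alpha> = dom \<alpha>'" "cod \<beta> = dom \<beta>'" "src (dom \<beta>) = trg (dom \<alpha>)"
  shows "H (V \<beta>' \<beta>) (V \<alpha>' \<alpha>) = V (H \<beta>' \<alpha>') (H \<beta> \<alpha>)"
  using ax_vassoc ax_interchange ax_anat ax_unat assms by auto

lemma assoc_nat:
  assumes "\<alpha> \<in> cell" "\<beta> \<in> cell" "\<gamma> \<in> cell"
    "src (dom \<gamma>) = trg (dom \<beta>)" "src (dom \<beta>) = trg (dom \<alpha>)"
  shows "V (a (cod \<gamma>) (cod \<beta>) (cod \<alpha>)) (H (H \<gamma> \<beta>) \<alpha>) =
         V (H \<gamma> (H \<beta> \<alpha>)) (a (dom \<gamma>) (dom \<beta>) (dom \<alpha>))"
  using ax_vassoc ax_interchange ax_anat ax_unat assms by auto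

lemma runit_nat:
  assumes "\<alpha> \<in> cell"
  shows "V (r (cod \<alpha>)) (H \<alpha> (I (bid1 C (src (dom \<alpha>))))) = V \<alpha> (r (dom \<alpha>))"
  using ax_vassoc ax_interchange ax_anat ax_unat assms by auto

lemma pentagon:
  assumes "f \<in> hom" "g \<in> hom" "h \<in> hom" "k \<in> hom" "src k = trg h" "src h = trg g" "src g = trg f"
  shows "V (H (I k) (a h g f)) (V (a k (c h g) f) (H (a k h g) (I f))) =
         V (a k h (c g f)) (a (c k h) g f)"
  using ax_pent ax_tri assms unfolding composable_def by auto

lemma triangle:
  assumes "f \<in> hom" "g \<in> hom" "src g = trg f"
  shows "V (H (I g) (l f)) (a g (bid1 C (src g)) f) = H (r g) (I f)"
  using ax_pent ax_tri assms unfolding composable_def by auto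

lemma wl:
  assumes "u \<in> hom" "x \<in> cell" "y \<in> cell" "cod y = dom x" "src u = trg (dom y)"
  shows "H (I u) (V x y) = V (H (I u) x) (H (I u) y)"
  using interchange[of y x "I u" "I u"] assms by (simp add: cell_src_trg)

lemma wr:
  assumes "f \<in> hom" "x \<in> cell" "y \<in> cell" "cod y = dom x" "src (dom y) = trg f"
  shows "H (V x y) (I f) = V (H x (I f)) (H y (I f))"
  using interchange[of "I f" "I f" y x] assms by (simp add: cell_src_trg)

lemma ext_eq:
  assumes "V p q = V p' q'" "z \<in> cell" "p \<in> cell" "q \<in> cell" "p' \<in> cell" "q' \<in> cell"
    "cod q = dom p" "cod q' = dom p'" "cod z = dom q" "cod z = dom q'"
  shows "V p (V q z) = V p' (V q' z)"
  using assms vassoc by metis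

lemma inv_cancel1:
  assumes "iso2 C A" "z \<in> cell" "cod z = dom A"
  shows "V (inv2 C A) (V A z) = z"
proof -
  have "V (V (inv2 C A) A) z = V (inv2 C A) (V A z)"
    by (rule vassoc) (use assms inv2_props[OF assms(1)] in auto)
  then show ?thesis using assms inv2_props[OF assms(1)] by simp
qed

lemma inv_cancel2:
  assumes "iso2 C A" "z \<in> cell" "cod z = cod A"
  shows "V A (V (inv2 C A) z) = z"
proof -
  have "V (V A (inv2 C A)) z = V A (V (inv2 C A) z)"
    by (rule vassoc) (use assms inv2_props[OF assms(1)] in auto)
  then show ?thesis using assms inv2_props[OF assms(1)] by simp
qed

lemma assoc_cancel[simp]:
  assumes "f \<in> hom" "g \<in> hom" "h \<in> hom" "src h = trg g" "src g = trg f" "z \<in> cell"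
  shows "cod z = c (c h g) f \<Longrightarrow> V (ai h g f) (V (a h g f) z) = z"
    "cod z = c h (c g f) \<Longrightarrow> V (a h g f) (V (ai h g f) z) = z"
  using inv_cancel1 inv_cancel2 assoc_typ[OF assms(1-5)] assms(6) by auto

lemma runit_cancel[simp]:
  assumes "f \<in> hom" "z \<in> cell"
  shows "cod z = c f (bid1 C (src f)) \<Longrightarrow> V (ri f) (V (r f) z) = z"
    "cod z = f \<Longrightarrow> V (r f) (V (ri f) z) = z"
  using inv_cancel1 inv_cancel2 unit_typ[OF assms(1)] assms(2) by auto

lemma ext_eq1:
  assumes "V p q = p'" "z \<in> cell" "p \<in> cell" "q \<in> cell"
    "cod q = dom p" "cod z = dom q"
  shows "V p (V q z) = V p' z"
  using assms vassoc by metis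

lemma cancel_left:
  assumes "iso2 C A" "x \<in> cell" "y \<in> cell" "cod x = dom A" "cod y = dom A" "V A x = V A y"
  shows "x = y"
  using inv_cancel1[OF assms(1) assms(2,4)] inv_cancel1[OF assms(1) assms(3,5)] assms(6) by metis

lemma ai_nat:
  assumes "\<alpha> \<in> cell" "\<beta> \<in> cell" "\<gamma> \<in> cell"
    "src (dom \<gamma>) = trg (dom \<beta>)" "src (dom \<beta>) = trg (dom \<alpha>)"
  shows "V (H (H \<gamma> \<beta>) \<alpha>) (ai (dom \<gamma>) (dom \<beta>) (dom \<alpha>)) =
         V (ai (cod \<gamma>) (cod \<beta>) (cod \<alpha>)) (H \<gamma> (H \<beta> \<alpha>))"
proof -
  have t: "src (cod \<gamma>) = trg (cod \<beta>)" "src (cod \<beta>) = trg (cod \<alpha>)"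
    using assms cell_src_trg by metis+
  have i: "iso2 C (a (cod \<gamma>) (cod \<beta>) (cod \<alpha>))" using assoc_typ assms t by simp
  show ?thesis
  proof (rule cancel_left[OF i])
    have "V (a (cod \<gamma>) (cod \<beta>) (cod \<alpha>)) (V (H (H \<gamma> \<beta>) \<alpha>) (ai (dom \<gamma>) (dom \<beta>) (dom \<alpha>)))
       = V (H \<gamma> (H \<beta> \<alpha>)) (V (a (dom \<gamma>) (dom \<beta>) (dom \<alpha>)) (ai (dom \<gamma>) (dom \<beta>) (dom \<alpha>)))"
      by (rule ext_eq) (use assms t assoc_nat in simp_all)
    also have "\<dots> = H \<gamma> (H \<beta> \<alpha>)" using assms t by simp
    also have "\<dots> = V (a (cod \<gamma>) (cod \<beta>) (cod \<alpha>)) (V (ai (cod \<gamma>) (cod \<beta>) (cod \<alpha>)) (H \<gamma> (H \<beta> \<alpha>)))"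
      using assms t by (simp flip: vassoc)
    finally show "V (a (cod \<gamma>) (cod \<beta>) (cod \<alpha>)) (V (H (H \<gamma> \<beta>) \<alpha>) (ai (dom \<gamma>) (dom \<beta>) (dom \<alpha>))) =
      V (a (cod \<gamma>) (cod \<beta>) (cod \<alpha>)) (V (ai (cod \<gamma>) (cod \<beta>) (cod \<alpha>)) (H \<gamma> (H \<beta> \<alpha>)))" .
  qed (use assms t in simp_all)
qed

lemma cancel_right:
  assumes "iso2 C A" "x \<in> cell" "y \<in> cell" "dom x = cod A" "dom y = cod A" "V x A = V y A"
  shows "x = y"
proof -
  have "x = V x (V A (inv2 C A))" using assms(1-5) inv2_props[OF assms(1)] by simp
  also have "\<dots> = V (V x A) (inv2 C A)" by (rule vassoc[symmetric]) (use assms(1-5) inv2_props[OF assms(1)] in auto)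
  also have "\<dots> = V (V y A) (inv2 C A)" by (simp only: assms(6))
  also have "\<dots> = V y (V A (inv2 C A))" by (rule vassoc) (use assms(1-5) inv2_props[OF assms(1)] in auto)
  also have "\<dots> = y" using assms(1-5) inv2_props[OF assms(1)] by simp
  finally show ?thesis .
qed

lemma rwhisk_faithful:
  assumes "\<phi> \<in> cell" "\<psi> \<in> cell" "dom \<phi> = dom \<psi>" "cod \<phi> = cod \<psi>"
    "H \<phi> (I (bid1 C (src (dom \<phi>)))) = H \<psi> (I (bid1 C (src (dom \<phi>))))"
  shows "\<phi> = \<psi>"
proof (rule cancel_right)
  show "iso2 C (r (dom \<phi>))" using unit_typ assms by simp
  have "V \<phi> (r (dom \<phi>)) = V (r (cod \<phi>)) (H \<phi> (I (bid1 C (src (dom \<phi>)))))"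
    using runit_nat[OF assms(1)] by simp
  also have "\<dots> = V (r (cod \<psi>)) (H \<psi> (I (bid1 C (src (dom \<psi>)))))" using assms by simp
  also have "\<dots> = V \<psi> (r (dom \<phi>))" using runit_nat[OF assms(2)] assms by simp
  finally show "V \<phi> (r (dom \<phi>)) = V \<psi> (r (dom \<phi>))" .
qed (use assms in simp_all)

lemma kelly:
  assumes u: "u \<in> hom" and f: "f \<in> hom" and uf: "src u = trg f"
  shows "r (c u f) = V (H (I u) (r f)) (a u f (bid1 C (src f)))"
proof -
  define e where "e = bid1 C (src f)"
  have e1: "bid1 C (src f) = e" by (simp add: e_def)
  have e: "e \<in> hom" "src e = src f" "trg e = src f" using f by (simp_all add: e_def)
  have ee: "c (bid1 C (trg e)) e = c e e" using e by (simp add: e1)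
  have "V (a u f e) (H (r (c u f)) (I e)) = V (a u f e) (V (H (I (c u f)) (l e)) (a (c u f) e e))"
    using triangle[of e "c u f"] u f uf e by (simp add: e1)
  also have "\<dots> = V (H (I u) (H (I f) (l e))) (V (a u f (c e e)) (a (c u f) e e))"
  proof (rule ext_eq)
    show "V (a u f e) (H (I (c u f)) (l e)) = V (H (I u) (H (I f) (l e))) (a u f (c e e))"
      using assoc_nat[of "l e" "I f" "I u"] u f uf e ee by simp
  qed (use u f uf e ee in simp_all)
  also have "\<dots> = V (H (I u) (H (I f) (l e))) (V (H (I u) (a f e e)) (V (a u (c f e) e) (H (a u f e) (I e))))"
    using pentagon[of e e f u] u f uf e by simp
  also have "\<dots> = V (H (I u) (H (r f) (I e))) (V (a u (c f e) e) (H (a u f e) (I e)))"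
  proof (rule ext_eq1)
    have "V (H (I u) (H (I f) (l e))) (H (I u) (a f e e)) = H (I u) (V (H (I f) (l e)) (a f e e))"
      using wl[of u "H (I f) (l e)" "a f e e"] u f uf e ee by simp
    also have "\<dots> = H (I u) (H (r f) (I e))" using triangle[of e f] f e by (simp add: e1)
    finally show "V (H (I u) (H (I f) (l e))) (H (I u) (a f e e)) = H (I u) (H (r f) (I e))" .
  qed (use u f uf e ee in simp_all)
  also have "\<dots> = V (a u f e) (V (H (H (I u) (r f)) (I e)) (H (a u f e) (I e)))"
  proof (rule ext_eq)
    show "V (H (I u) (H (r f) (I e))) (a u (c f e) e) = V (a u f e) (H (H (I u) (r f)) (I e))"
      using assoc_nat[of "I e" "r f" "I u"] u f uf e by (simp add: e1)
  qed (use u f uf e ee in \<open>simp_all add: e1\<close>)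
  also have "\<dots> = V (a u f e) (H (V (H (I u) (r f)) (a u f e)) (I e))"
    using wr[of e "H (I u) (r f)" "a u f e"] u f uf e by (simp add: e1)
  finally have "H (r (c u f)) (I e) = H (V (H (I u) (r f)) (a u f e)) (I e)"
    by (rule cancel_left[rotated 5]) (use u f uf e assoc_typ in \<open>simp_all add: e1\<close>)
  note X = this
  show ?thesis
  proof (rule rwhisk_faithful)
    show "H (r (c u f)) (I (bid1 C (src (dom (r (c u f)))))) =
        H (V (H (I u) (r f)) (a u f (bid1 C (src f)))) (I (bid1 C (src (dom (r (c u f))))))"
      using X u f uf e e1 by simp
  qed (use u f uf e e1 in simp_all)
qed

lemma assoc_whisk_cancel:
  assumes "f \<in> hom" "g \<in> hom" "h \<in> hom" "k \<in> hom" "src h = trg g" "src g = trg f" "src f = trg k"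
    "z \<in> cell" "cod z = c (c h (c g f)) k"
  shows "V (H (a h g f) (I k)) (V (H (ai h g f) (I k)) z) = z"
proof -
  have "V (H (a h g f) (I k)) (V (H (ai h g f) (I k)) z) = V (H (V (a h g f) (ai h g f)) (I k)) z"
  proof (rule ext_eq1)
    show "V (H (a h g f) (I k)) (H (ai h g f) (I k)) = H (V (a h g f) (ai h g f)) (I k)"
      using wr[of k "a h g f" "ai h g f"] assms by simp
  qed (use assms in simp_all)
  then show ?thesis using assms by simp
qed

lemma pent_inv:
  assumes "f \<in> hom" "g \<in> hom" "h \<in> hom" "u \<in> hom" "src u = trg f" "src f = trg g" "src g = trg h"
  shows "V (ai u f (c g h)) (H (I u) (a f g h)) =
         V (a (c u f) g h) (V (H (ai u f g) (I h)) (ai u (c f g) h))"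
proof (rule cancel_left)
  show "iso2 C (a u f (c g h))" using assoc_typ assms by simp
  have "V (a u f (c g h)) (V (a (c u f) g h) (V (H (ai u f g) (I h)) (ai u (c f g) h)))
      = V (H (I u) (a f g h)) (V (a u (c f g) h) (V (H (a u f g) (I h)) (V (H (ai u f g) (I h)) (ai u (c f g) h))))"
  proof -
    have "V (a u f (c g h)) (V (a (c u f) g h) (V (H (ai u f g) (I h)) (ai u (c f g) h))) =
          V (H (I u) (a f g h)) (V (V (a u (c f g) h) (H (a u f g) (I h))) (V (H (ai u f g) (I h)) (ai u (c f g) h)))"
    proof (rule ext_eq)
      show "V (a u f (c g h)) (a (c u f) g h) = V (H (I u) (a f g h)) (V (a u (c f g) h) (H (a u f g) (I h)))"
        using pentagon[of h g f u] assms by simp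
    qed (use assms in simp_all)
    then show ?thesis using assms by simp
  qed
  also have "\<dots> = H (I u) (a f g h)" using assms assoc_whisk_cancel by simp
  finally show "V (a u f (c g h)) (V (ai u f (c g h)) (H (I u) (a f g h))) =
    V (a u f (c g h)) (V (a (c u f) g h) (V (H (ai u f g) (I h)) (ai u (c f g) h)))"
    using assms by simp
qed (use assms in simp_all)

lemma kelly_inv:
  assumes u: "u \<in> hom" and f: "f \<in> hom" and uf: "src u = trg f"
  shows "V (ai u f (bid1 C (src f))) (H (I u) (ri f)) = ri (c u f)"
proof (rule cancel_left)
  show "iso2 C (r (c u f))" using unit_typ assms by simp
  have "V (r (c u f)) (V (ai u f (bid1 C (src f))) (H (I u) (ri f))) =
        V (H (I u) (r f)) (V (a u f (bid1 C (src f))) (V (ai u f (bid1 C (src f))) (H (I u) (ri f))))"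
    using kelly[OF assms] assms by simp
  also have "\<dots> = V (H (I u) (r f)) (H (I u) (ri f))" using assms by simp
  also have "\<dots> = H (I u) (V (r f) (ri f))" using wl[of u "r f" "ri f"] assms by simp
  also have "\<dots> = V (r (c u f)) (ri (c u f))" using assms by simp
  finally show "V (r (c u f)) (V (ai u f (bid1 C (src f))) (H (I u) (ri f))) = V (r (c u f)) (ri (c u f))" .
qed (use assms in simp_all)

end

locale sf = B: bc B + C: bc C
  for B :: "('o, 'a, 'c) bicat" and C :: "('o2, 'a2, 'c2) bicat" +
  fixes F :: "('o, 'a, 'c, 'o2, 'a2, 'c2) laxf" and u :: 'a2 and X Y :: 'o2
  assumes lf: "lax_functor B C F" and u: "u \<in> bhom C" and uX: "bsrc C u = X" and uY: "btrg C u = Y"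
begin

lemma lf_obj[simp]: "A \<in> bob B \<Longrightarrow> fobj F A \<in> bob C"
  using lf unfolding lax_functor_def by blast
lemma lf_mor[simp]: "p \<in> bhom B \<Longrightarrow> fmor F p \<in> bhom C"
  "p \<in> bhom B \<Longrightarrow> bsrc C (fmor F p) = fobj F (bsrc B p)"
  "p \<in> bhom B \<Longrightarrow> btrg C (fmor F p) = fobj F (btrg B p)"
  using lf unfolding lax_functor_def by blast+
lemma lf_cell[simp]: "\<alpha> \<in> bcell B \<Longrightarrow> fcell F \<alpha> \<in> bcell C"
  "\<alpha> \<in> bcell B \<Longrightarrow> bdom C (fcell F \<alpha>) = fmor F (bdom B \<alpha>)"
  "\<alpha> \<in> bcell B \<Longrightarrow> bcod C (fcell F \<alpha>) = fmor F (bcod B \<alpha>)"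
  using lf unfolding lax_functor_def cell_in_def by blast+
lemma lf_id[simp]: "p \<in> bhom B \<Longrightarrow> fcell F (bid2 B p) = bid2 C (fmor F p)"
  using lf unfolding lax_functor_def by blast
lemma lf_unit[simp]: "A \<in> bob B \<Longrightarrow> funit F A \<in> bcell C"
  "A \<in> bob B \<Longrightarrow> bdom C (funit F A) = bid1 C (fobj F A)"
  "A \<in> bob B \<Longrightarrow> bcod C (funit F A) = fmor F (bid1 B A)"
  using lf unfolding lax_functor_def cell_in_def by blast+
lemma lf_comp[simp]:
  assumes "f \<in> bhom B" "g \<in> bhom B" "bsrc B g = btrg B f"
  shows "fcomp F g f \<in> bcell C" "bdom C (fcomp F g f) = bcomp1 C (fmor F g) (fmor F f)"
    "bcod C (fcomp F g f) = fmor F (bcomp1 B g f)"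
  using lf assms unfolding lax_functor_def cell_in_def composable_def by blast+

lemma u_simps[simp]: "u \<in> bhom C" "bsrc C u = X" "btrg C u = Y"
  using u uX uY by auto

lemma map_obj:
  "Af \<in> sl_obs B C F X \<Longrightarrow> sl_map_obj C u Af \<in> sl_obs B C F Y"
  unfolding sl_obs_def sl_map_obj_def by auto

lemma homsE:
  assumes "P \<in> sl_homs B C F Z"
  obtains A0 f0 A1 f1 p \<theta> where "P = ((A0, f0), (A1, f1), p, \<theta>)"
    "A0 \<in> bob B" "f0 \<in> bhom C" "bsrc C f0 = fobj F A0" "btrg C f0 = Z"
    "A1 \<in> bob B" "f1 \<in> bhom C" "bsrc C f1 = fobj F A1" "btrg C f1 = Z"
    "p \<in> bhom B" "bsrc B p = A0" "btrg B p = A1"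
    "\<theta> \<in> bcell C" "bdom C \<theta> = f0" "bcod C \<theta> = bcomp1 C f1 (fmor F p)"
proof -
  obtain A0 f0 A1 f1 p \<theta> where P: "P = ((A0, f0), (A1, f1), p, \<theta>)" by (metis prod.exhaust)
  show thesis using assms by (intro that[OF P]) (auto simp: P sl_homs_def sl_obs_def cell_in_def)
qed

lemma homsI:
  assumes "A0 \<in> bob B" "f0 \<in> bhom C" "bsrc C f0 = fobj F A0" "btrg C f0 = Z"
    "A1 \<in> bob B" "f1 \<in> bhom C" "bsrc C f1 = fobj F A1" "btrg C f1 = Z"
    "p \<in> bhom B" "bsrc B p = A0" "btrg B p = A1"
    "\<theta> \<in> bcell C" "bdom C \<theta> = f0" "bcod C \<theta> = bcomp1 C f1 (fmor F p)"
  shows "((A0, f0), (A1, f1), p, \<theta>) \<in> sl_homs B C F Z"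
  using assms unfolding sl_homs_def sl_obs_def cell_in_def by auto

lemma map_mor:
  assumes "P \<in> sl_homs B C F X"
  shows "sl_map_mor C F u P \<in> sl_homs B C F Y"
  using assms
proof (cases rule: homsE)
  case (1 A0 f0 A1 f1 p \<theta>)
  show ?thesis unfolding 1(1) sl_map_mor_def sl_map_obj_def sl_src_def sl_trg_def sl_p_def sl_theta_def fst_conv snd_conv prod.case
    by (rule homsI) (use 1 in auto)
qed

lemma comp_closed:
  assumes "Q \<in> sl_homs B C F Z" "P \<in> sl_homs B C F Z" "sl_src Q = sl_trg P"
  shows "sl_comp1 B C F Q P \<in> sl_homs B C F Z"
  using assms(1)
proof (cases rule: homsE)
  case Q: (1 A1 f1 A2 f2 p1 \<theta>1)
  from assms(2) show ?thesis
  proof (cases rule: homsE)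
    case P: (1 A0 f0 A1' f1' p0 \<theta>0)
    have e: "A1' = A1" "f1' = f1" using assms(3) Q P by (auto simp: sl_src_def sl_trg_def)
    show ?thesis unfolding Q(1) P(1) e sl_comp1_def sl_src_def sl_trg_def sl_p_def sl_theta_def fst_conv snd_conv prod.case
      by (rule homsI) (use Q P e in auto)
  qed
qed

lemma id_closed:
  assumes "Af \<in> sl_obs B C F Z"
  shows "sl_id1 C B F Af \<in> sl_homs B C F Z"
  using assms unfolding sl_id1_def sl_obs_def
  by (auto intro!: homsI)

lemma idcell:
  assumes "P \<in> sl_homs B C F Z"
  shows "(P, P, bid2 B (sl_p P)) \<in> sl_cells B C F Z"
  using assms
proof (cases rule: homsE)
  case (1 A0 f0 A1 f1 p \<theta>)
  then show ?thesis using assms unfolding sl_cells_def cell_in_def sl_p_def sl_trg_def sl_src_def sl_theta_def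
    by auto
qed

lemma cellsE:
  assumes "\<gamma> \<in> sl_cells B C F Z"
  obtains A0 f0 A1 f1 p0 \<theta>0 p1 \<theta>1 \<alpha> where
    "\<gamma> = (((A0, f0), (A1, f1), p0, \<theta>0), ((A0, f0), (A1, f1), p1, \<theta>1), \<alpha>)"
    "((A0, f0), (A1, f1), p0, \<theta>0) \<in> sl_homs B C F Z"
    "((A0, f0), (A1, f1), p1, \<theta>1) \<in> sl_homs B C F Z"
    "\<alpha> \<in> bcell B" "bdom B \<alpha> = p0" "bcod B \<alpha> = p1"
    "bvcomp C (bhcomp C (bid2 C f1) (fcell F \<alpha>)) \<theta>0 = \<theta>1"
proof -
  obtain P0 P1 \<alpha> where g: "\<gamma> = (P0, P1, \<alpha>)" by (metis prod.exhaust)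
  obtain A0 f0 A1 f1 p0 \<theta>0 where P0: "P0 = ((A0, f0), (A1, f1), p0, \<theta>0)" by (metis prod.exhaust)
  obtain A0' f0' A1' f1' p1 \<theta>1 where P1: "P1 = ((A0', f0'), (A1', f1'), p1, \<theta>1)" by (metis prod.exhaust)
  show thesis using assms
    by (intro that) (auto simp: g P0 P1 sl_cells_def cell_in_def sl_src_def sl_trg_def sl_p_def sl_theta_def)
qed

lemma map_cell:
  assumes "\<gamma> \<in> sl_cells B C F X"
  shows "(case \<gamma> of (P0, P1, \<alpha>) \<Rightarrow> (sl_map_mor C F u P0, sl_map_mor C F u P1, \<alpha>)) \<in> sl_cells B C F Y"
  using assms
proof (cases rule: cellsE)
  case (1 A0 f0 A1 f1 p0 \<theta>0 p1 \<theta>1 \<alpha>)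
  from 1(2) obtain "A0 \<in> bob B" "f0 \<in> bhom C" "bsrc C f0 = fobj F A0" "btrg C f0 = X"
    "A1 \<in> bob B" "f1 \<in> bhom C" "bsrc C f1 = fobj F A1" "btrg C f1 = X"
    "p0 \<in> bhom B" "bsrc B p0 = A0" "btrg B p0 = A1"
    "\<theta>0 \<in> bcell C" "bdom C \<theta>0 = f0" "bcod C \<theta>0 = bcomp1 C f1 (fmor F p0)"
    by (cases rule: homsE) auto
  note t0 = this
  from 1(3) obtain "p1 \<in> bhom B" "bsrc B p1 = A0" "btrg B p1 = A1"
    "\<theta>1 \<in> bcell C" "bdom C \<theta>1 = f0" "bcod C \<theta>1 = bcomp1 C f1 (fmor F p1)"
    by (cases rule: homsE) auto
  note t1 = this
  have eq: "C.V (C.H (C.I (C.c u f1)) (fcell F \<alpha>)) (C.V (C.ai u f1 (fmor F p0)) (C.H (C.I u) \<theta>0)) =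
        C.V (C.ai u f1 (fmor F p1)) (C.H (C.I u) \<theta>1)"
  proof -
    have "C.V (C.H (C.I (C.c u f1)) (fcell F \<alpha>)) (C.V (C.ai u f1 (fmor F p0)) (C.H (C.I u) \<theta>0)) =
          C.V (C.ai u f1 (fmor F p1)) (C.V (C.H (C.I u) (C.H (C.I f1) (fcell F \<alpha>))) (C.H (C.I u) \<theta>0))"
    proof (rule C.ext_eq)
      show "C.V (C.H (C.I (C.c u f1)) (fcell F \<alpha>)) (C.ai u f1 (fmor F p0)) =
            C.V (C.ai u f1 (fmor F p1)) (C.H (C.I u) (C.H (C.I f1) (fcell F \<alpha>)))"
        using C.ai_nat[of "fcell F \<alpha>" "C.I f1" "C.I u"] 1 t0 t1 by simp
    qed (use 1 t0 t1 in simp_all)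
    also have "\<dots> = C.V (C.ai u f1 (fmor F p1)) (C.H (C.I u) \<theta>1)"
      using C.wl[of u "C.H (C.I f1) (fcell F \<alpha>)" \<theta>0] 1 t0 t1 by simp
    finally show ?thesis .
  qed
  show ?thesis unfolding 1(1) prod.case
    unfolding sl_cells_def mem_Collect_eq prod.case
    using map_mor[OF 1(2)] map_mor[OF 1(3)] 1 eq
    by (simp add: sl_map_mor_def sl_map_obj_def sl_src_def sl_trg_def sl_p_def sl_theta_def cell_in_def)
qed

lemma map_id:
  assumes "Af \<in> sl_obs B C F X"
  shows "sl_map_mor C F u (sl_id1 C B F Af) = sl_id1 C B F (sl_map_obj C u Af)"
proof -
  obtain A f where Af: "Af = (A, f)" by (metis prod.exhaust)
  have t: "A \<in> bob B" "f \<in> bhom C" "bsrc C f = fobj F A" "btrg C f = X"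
    using assms unfolding Af sl_obs_def by auto
  have "C.V (C.ai u f (fmor F (bid1 B A))) (C.H (C.I u) (C.V (C.H (C.I f) (funit F A)) (C.ri f))) =
        C.V (C.H (C.I (C.c u f)) (funit F A)) (C.ri (C.c u f))"
  proof -
    have "C.V (C.ai u f (fmor F (bid1 B A))) (C.H (C.I u) (C.V (C.H (C.I f) (funit F A)) (C.ri f))) =
          C.V (C.ai u f (fmor F (bid1 B A))) (C.V (C.H (C.I u) (C.H (C.I f) (funit F A))) (C.H (C.I u) (C.ri f)))"
      using C.wl[of u "C.H (C.I f) (funit F A)" "C.ri f"] t by simp
    also have "\<dots> = C.V (C.H (C.I (C.c u f)) (funit F A)) (C.V (C.ai u f (bid1 C (bsrc C f))) (C.H (C.I u) (C.ri f)))"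
    proof (rule C.ext_eq)
      show "C.V (C.ai u f (fmor F (bid1 B A))) (C.H (C.I u) (C.H (C.I f) (funit F A))) =
            C.V (C.H (C.I (C.c u f)) (funit F A)) (C.ai u f (bid1 C (bsrc C f)))"
        using C.ai_nat[of "funit F A" "C.I f" "C.I u"] t by simp
    qed (use t in simp_all)
    also have "\<dots> = C.V (C.H (C.I (C.c u f)) (funit F A)) (C.ri (C.c u f))"
      using C.kelly_inv[of u f] t by simp
    finally show ?thesis .
  qed
  then show ?thesis
    by (simp add: Af sl_id1_def sl_map_mor_def sl_map_obj_def sl_src_def sl_trg_def sl_p_def sl_theta_def)
qed

lemma comp_theta:
  assumes t: "A0 \<in> bob B" "A1 \<in> bob B" "A2 \<in> bob B"
    "f0 \<in> bhom C" "bsrc C f0 = fobj F A0" "btrg C f0 = X"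
    "f1 \<in> bhom C" "bsrc C f1 = fobj F A1" "btrg C f1 = X"
    "f2 \<in> bhom C" "bsrc C f2 = fobj F A2" "btrg C f2 = X"
    "p0 \<in> bhom B" "bsrc B p0 = A0" "btrg B p0 = A1"
    "p1 \<in> bhom B" "bsrc B p1 = A1" "btrg B p1 = A2"
    "\<theta>0 \<in> bcell C" "bdom C \<theta>0 = f0" "bcod C \<theta>0 = bcomp1 C f1 (fmor F p0)"
    "\<theta>1 \<in> bcell C" "bdom C \<theta>1 = f1" "bcod C \<theta>1 = bcomp1 C f2 (fmor F p1)"
  shows "C.V (C.ai u f2 (fmor F (B.c p1 p0))) (C.H (C.I u)
            (C.V (C.H (C.I f2) (fcomp F p1 p0)) (C.V (C.a f2 (fmor F p1) (fmor F p0))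
               (C.V (C.H \<theta>1 (C.I (fmor F p0))) \<theta>0)))) =
         C.V (C.H (C.I (C.c u f2)) (fcomp F p1 p0)) (C.V (C.a (C.c u f2) (fmor F p1) (fmor F p0))
           (C.V (C.H (C.V (C.ai u f2 (fmor F p1)) (C.H (C.I u) \<theta>1)) (C.I (fmor F p0)))
              (C.V (C.ai u f1 (fmor F p0)) (C.H (C.I u) \<theta>0))))"
proof -
  let ?\<phi>0 = "fmor F p0" and ?\<phi>1 = "fmor F p1" and ?F2 = "fcomp F p1 p0"
  have "C.V (C.ai u f2 (fmor F (B.c p1 p0))) (C.H (C.I u)
            (C.V (C.H (C.I f2) ?F2) (C.V (C.a f2 ?\<phi>1 ?\<phi>0) (C.V (C.H \<theta>1 (C.I ?\<phi>0)) \<theta>0)))) =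
        C.V (C.ai u f2 (fmor F (B.c p1 p0))) (C.V (C.H (C.I u) (C.H (C.I f2) ?F2))
          (C.V (C.H (C.I u) (C.a f2 ?\<phi>1 ?\<phi>0)) (C.V (C.H (C.I u) (C.H \<theta>1 (C.I ?\<phi>0))) (C.H (C.I u) \<theta>0))))"
    using t by (simp add: C.wl)
  also have "\<dots> = C.V (C.H (C.I (C.c u f2)) ?F2) (C.V (C.ai u f2 (C.c ?\<phi>1 ?\<phi>0))
          (C.V (C.H (C.I u) (C.a f2 ?\<phi>1 ?\<phi>0)) (C.V (C.H (C.I u) (C.H \<theta>1 (C.I ?\<phi>0))) (C.H (C.I u) \<theta>0))))"
  proof (rule C.ext_eq)
    show "C.V (C.ai u f2 (fmor F (B.c p1 p0))) (C.H (C.I u) (C.H (C.I f2) ?F2)) =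
          C.V (C.H (C.I (C.c u f2)) ?F2) (C.ai u f2 (C.c ?\<phi>1 ?\<phi>0))"
      using C.ai_nat[of ?F2 "C.I f2" "C.I u"] t by simp
  qed (use t in simp_all)
  also have "\<dots> = C.V (C.H (C.I (C.c u f2)) ?F2) (C.V (C.a (C.c u f2) ?\<phi>1 ?\<phi>0)
          (C.V (C.H (C.ai u f2 ?\<phi>1) (C.I ?\<phi>0)) (C.V (C.ai u (C.c f2 ?\<phi>1) ?\<phi>0)
          (C.V (C.H (C.I u) (C.H \<theta>1 (C.I ?\<phi>0))) (C.H (C.I u) \<theta>0)))))"
  proof -
    have "C.V (C.ai u f2 (C.c ?\<phi>1 ?\<phi>0)) (C.V (C.H (C.I u) (C.a f2 ?\<phi>1 ?\<phi>0)) (C.V (C.H (C.I u) (C.H \<theta>1 (C.I ?\<phi>0))) (C.H (C.I u) \<theta>0)))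
       = C.V (C.a (C.c u f2) ?\<phi>1 ?\<phi>0) (C.V (C.V (C.H (C.ai u f2 ?\<phi>1) (C.I ?\<phi>0)) (C.ai u (C.c f2 ?\<phi>1) ?\<phi>0))
          (C.V (C.H (C.I u) (C.H \<theta>1 (C.I ?\<phi>0))) (C.H (C.I u) \<theta>0)))"
    proof (rule C.ext_eq)
      show "C.V (C.ai u f2 (C.c ?\<phi>1 ?\<phi>0)) (C.H (C.I u) (C.a f2 ?\<phi>1 ?\<phi>0)) =
         C.V (C.a (C.c u f2) ?\<phi>1 ?\<phi>0) (C.V (C.H (C.ai u f2 ?\<phi>1) (C.I ?\<phi>0)) (C.ai u (C.c f2 ?\<phi>1) ?\<phi>0))"
        using C.pent_inv[of f2 ?\<phi>1 ?\<phi>0 u] t by simp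
    qed (use t in simp_all)
    then show ?thesis using t by simp
  qed
  also have "\<dots> = C.V (C.H (C.I (C.c u f2)) ?F2) (C.V (C.a (C.c u f2) ?\<phi>1 ?\<phi>0)
          (C.V (C.H (C.ai u f2 ?\<phi>1) (C.I ?\<phi>0)) (C.V (C.H (C.H (C.I u) \<theta>1) (C.I ?\<phi>0))
          (C.V (C.ai u f1 ?\<phi>0) (C.H (C.I u) \<theta>0)))))"
  proof -
    have "C.V (C.ai u (C.c f2 ?\<phi>1) ?\<phi>0) (C.V (C.H (C.I u) (C.H \<theta>1 (C.I ?\<phi>0))) (C.H (C.I u) \<theta>0)) =
          C.V (C.H (C.H (C.I u) \<theta>1) (C.I ?\<phi>0)) (C.V (C.ai u f1 ?\<phi>0) (C.H (C.I u) \<theta>0))"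
    proof (rule C.ext_eq)
      show "C.V (C.ai u (C.c f2 ?\<phi>1) ?\<phi>0) (C.H (C.I u) (C.H \<theta>1 (C.I ?\<phi>0))) =
            C.V (C.H (C.H (C.I u) \<theta>1) (C.I ?\<phi>0)) (C.ai u f1 ?\<phi>0)"
        using C.ai_nat[of "C.I ?\<phi>0" \<theta>1 "C.I u"] t by simp
    qed (use t in simp_all)
    then show ?thesis by simp
  qed
  also have "\<dots> = C.V (C.H (C.I (C.c u f2)) ?F2) (C.V (C.a (C.c u f2) ?\<phi>1 ?\<phi>0)
           (C.V (C.H (C.V (C.ai u f2 ?\<phi>1) (C.H (C.I u) \<theta>1)) (C.I ?\<phi>0))
              (C.V (C.ai u f1 ?\<phi>0) (C.H (C.I u) \<theta>0))))"
  proof -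
    have "C.V (C.H (C.ai u f2 ?\<phi>1) (C.I ?\<phi>0)) (C.V (C.H (C.H (C.I u) \<theta>1) (C.I ?\<phi>0))
          (C.V (C.ai u f1 ?\<phi>0) (C.H (C.I u) \<theta>0))) =
          C.V (C.H (C.V (C.ai u f2 ?\<phi>1) (C.H (C.I u) \<theta>1)) (C.I ?\<phi>0)) (C.V (C.ai u f1 ?\<phi>0) (C.H (C.I u) \<theta>0))"
    proof (rule C.ext_eq1)
      show "C.V (C.H (C.ai u f2 ?\<phi>1) (C.I ?\<phi>0)) (C.H (C.H (C.I u) \<theta>1) (C.I ?\<phi>0)) =
            C.H (C.V (C.ai u f2 ?\<phi>1) (C.H (C.I u) \<theta>1)) (C.I ?\<phi>0)"
        using C.wr[of ?\<phi>0 "C.ai u f2 ?\<phi>1" "C.H (C.I u) \<theta>1"] t by simp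
    qed (use t in simp_all)
    then show ?thesis by simp
  qed
  finally show ?thesis .
qed

lemma map_comp:
  assumes "Q \<in> sl_homs B C F X" "P \<in> sl_homs B C F X" "sl_src Q = sl_trg P"
  shows "sl_comp1 B C F (sl_map_mor C F u Q) (sl_map_mor C F u P) = sl_map_mor C F u (sl_comp1 B C F Q P)"
  using assms(1)
proof (cases rule: homsE)
  case Q: (1 A1 f1 A2 f2 p1 \<theta>1)
  from assms(2) show ?thesis
  proof (cases rule: homsE)
    case P: (1 A0 f0 A1' f1' p0 \<theta>0)
    have e: "A1' = A1" "f1' = f1" using assms(3) Q P by (auto simp: sl_src_def sl_trg_def)
    show ?thesis unfolding Q(1) P(1) e sl_comp1_def sl_map_mor_def sl_map_obj_def sl_src_def sl_trg_def sl_p_def sl_theta_def fst_conv snd_conv prod.case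
      using comp_theta[of A0 A1 A2 f0 f1 f2 p0 p1 \<theta>0 \<theta>1] Q P e by simp
  qed
qed

lemma slice_sel[simp]:
  "bob (lax_slice B C F Z) = sl_obs B C F Z"
  "bhom (lax_slice B C F Z) = sl_homs B C F Z"
  "bsrc (lax_slice B C F Z) = sl_src"
  "btrg (lax_slice B C F Z) = sl_trg"
  "bcell (lax_slice B C F Z) = sl_cells B C F Z"
  "bdom (lax_slice B C F Z) = (\<lambda>(P0, P1, \<alpha>). P0)"
  "bcod (lax_slice B C F Z) = (\<lambda>(P0, P1, \<alpha>). P1)"
  "bid1 (lax_slice B C F Z) = sl_id1 C B F"
  "bcomp1 (lax_slice B C F Z) = sl_comp1 B C F"
  "bid2 (lax_slice B C F Z) = (\<lambda>P. (P, P, bid2 B (sl_p P)))"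
  "bvcomp (lax_slice B C F Z) = (\<lambda>(Q0, Q1, \<beta>) (P0, P1, \<alpha>). (P0, Q1, bvcomp B \<beta> \<alpha>))"
  "bhcomp (lax_slice B C F Z) = (\<lambda>(Q0, Q1, \<beta>) (P0, P1, \<alpha>).
                 (sl_comp1 B C F Q0 P0, sl_comp1 B C F Q1 P1, bhcomp B \<beta> \<alpha>))"
  "bassoc (lax_slice B C F Z) = (\<lambda>H1 G1 P. (sl_comp1 B C F (sl_comp1 B C F H1 G1) P, sl_comp1 B C F H1 (sl_comp1 B C F G1 P),
                 bassoc B (sl_p H1) (sl_p G1) (sl_p P)))"
  "blunit (lax_slice B C F Z) = (\<lambda>P. (sl_comp1 B C F (sl_id1 C B F (sl_trg P)) P, P, blunit B (sl_p P)))"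
  "brunit (lax_slice B C F Z) = (\<lambda>P. (sl_comp1 B C F P (sl_id1 C B F (sl_src P)), P, brunit B (sl_p P)))"
  by (simp_all add: lax_slice_def)

lemma G_sel[simp]:
  "fobj (slice_functor B C F Y u) = sl_map_obj C u"
  "fmor (slice_functor B C F Y u) = sl_map_mor C F u"
  "fcell (slice_functor B C F Y u) = (\<lambda>(P0, P1, \<alpha>). (sl_map_mor C F u P0, sl_map_mor C F u P1, \<alpha>))"
  "fcomp (slice_functor B C F Y u) = (\<lambda>Q P. (sl_comp1 B C F (sl_map_mor C F u Q) (sl_map_mor C F u P),
       sl_comp1 B C F (sl_map_mor C F u Q) (sl_map_mor C F u P),
       bid2 B (sl_p (sl_comp1 B C F (sl_map_mor C F u Q) (sl_map_mor C F u P)))))"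
  "funit (slice_functor B C F Y u) = (\<lambda>Af. (sl_id1 C B F (sl_map_obj C u Af), sl_id1 C B F (sl_map_obj C u Af),
       bid2 B (sl_p (sl_id1 C B F (sl_map_obj C u Af)))))"
  by (simp_all add: slice_functor_def)

lemma sl_simps[simp]:
  "sl_p (sl_map_mor C F u P) = sl_p P"
  "sl_src (sl_map_mor C F u P) = sl_map_obj C u (sl_src P)"
  "sl_trg (sl_map_mor C F u P) = sl_map_obj C u (sl_trg P)"
  "sl_p (sl_comp1 B C F Q P) = bcomp1 B (sl_p Q) (sl_p P)"
  "sl_src (sl_comp1 B C F Q P) = sl_src P"
  "sl_trg (sl_comp1 B C F Q P) = sl_trg Q"
  "sl_p (sl_id1 C B F Af) = bid1 B (fst Af)"
  "sl_src (sl_id1 C B F Af) = Af"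
  "sl_trg (sl_id1 C B F Af) = Af"
  by (simp_all add: sl_map_mor_def sl_comp1_def sl_id1_def sl_p_def sl_src_def sl_trg_def split: prod.splits)

lemma hom_facts:
  assumes "P \<in> sl_homs B C F Z"
  shows "sl_p P \<in> bhom B" "bsrc B (sl_p P) = fst (sl_src P)" "btrg B (sl_p P) = fst (sl_trg P)"
    "sl_src P \<in> sl_obs B C F Z" "sl_trg P \<in> sl_obs B C F Z"
  using assms unfolding sl_homs_def sl_p_def sl_src_def sl_trg_def by auto

lemma obs_fst: "Af \<in> sl_obs B C F Z \<Longrightarrow> fst Af \<in> bob B"
  unfolding sl_obs_def by auto

lemma cell_facts:
  assumes "(P0, P1, \<alpha>) \<in> sl_cells B C F Z"
  shows "P0 \<in> sl_homs B C F Z" "P1 \<in> sl_homs B C F Z" "sl_src P0 = sl_src P1" "sl_trg P0 = sl_trg P1"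
    "\<alpha> \<in> bcell B" "bdom B \<alpha> = sl_p P0" "bcod B \<alpha> = sl_p P1"
  using assms unfolding sl_cells_def cell_in_def by auto

lemma main: "strict_functor (lax_slice B C F X) (lax_slice B C F Y) (slice_functor B C F Y u)"
  unfolding strict_functor_def lax_functor_def
proof (intro conjI)
  show "\<forall>A\<in>bob (lax_slice B C F X). fobj (slice_functor B C F Y u) A \<in> bob (lax_slice B C F Y)"
    using map_obj by simp
  show "\<forall>f\<in>bhom (lax_slice B C F X). fmor (slice_functor B C F Y u) f \<in> bhom (lax_slice B C F Y) \<and>
        bsrc (lax_slice B C F Y) (fmor (slice_functor B C F Y u) f) = fobj (slice_functor B C F Y u) (bsrc (lax_slice B C F X) f) \<and>
        btrg (lax_slice B C F Y) (fmor (slice_functor B C F Y u) f) = fobj (slice_functor B C F Y u) (btrg (lax_slice B C F X) f)"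
    using map_mor by simp
  show "\<forall>\<alpha>\<in>bcell (lax_slice B C F X). cell_in (lax_slice B C F Y) (fcell (slice_functor B C F Y u) \<alpha>)
      (fmor (slice_functor B C F Y u) (bdom (lax_slice B C F X) \<alpha>)) (fmor (slice_functor B C F Y u) (bcod (lax_slice B C F X) \<alpha>))"
  proof
    fix \<gamma> assume g: "\<gamma> \<in> bcell (lax_slice B C F X)"
    obtain P0 P1 \<alpha> where ge: "\<gamma> = (P0, P1, \<alpha>)" by (metis prod.exhaust)
    show "cell_in (lax_slice B C F Y) (fcell (slice_functor B C F Y u) \<gamma>)
      (fmor (slice_functor B C F Y u) (bdom (lax_slice B C F X) \<gamma>)) (fmor (slice_functor B C F Y u) (bcod (lax_slice B C F X) \<gamma>))"
      using map_cell[of \<gamma>] g unfolding ge cell_in_def by simp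
  qed
  show "\<forall>f\<in>bhom (lax_slice B C F X). fcell (slice_functor B C F Y u) (bid2 (lax_slice B C F X) f) =
      bid2 (lax_slice B C F Y) (fmor (slice_functor B C F Y u) f)"
    by simp
  show "\<forall>\<alpha> \<beta>. \<alpha> \<in> bcell (lax_slice B C F X) \<and> \<beta> \<in> bcell (lax_slice B C F X) \<and>
      bcod (lax_slice B C F X) \<alpha> = bdom (lax_slice B C F X) \<beta> \<longrightarrow>
      fcell (slice_functor B C F Y u) (bvcomp (lax_slice B C F X) \<beta> \<alpha>) =
      bvcomp (lax_slice B C F Y) (fcell (slice_functor B C F Y u) \<beta>) (fcell (slice_functor B C F Y u) \<alpha>)"
    by (auto split: prod.splits)
  show "\<forall>A\<in>bob (lax_slice B C F X). cell_in (lax_slice B C F Y) (funit (slice_functor B C F Y u) A)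
      (bid1 (lax_slice B C F Y) (fobj (slice_functor B C F Y u) A))
      (fmor (slice_functor B C F Y u) (bid1 (lax_slice B C F X) A))"
  proof
    fix A assume A: "A \<in> bob (lax_slice B C F X)"
    then have A': "A \<in> sl_obs B C F X" by simp
    show "cell_in (lax_slice B C F Y) (funit (slice_functor B C F Y u) A)
      (bid1 (lax_slice B C F Y) (fobj (slice_functor B C F Y u) A))
      (fmor (slice_functor B C F Y u) (bid1 (lax_slice B C F X) A))"
      using idcell[OF id_closed[OF map_obj[OF A']]] map_id[OF A'] unfolding cell_in_def by simp
  qed
  show "\<forall>g f. composable (lax_slice B C F X) g f \<longrightarrow>
      cell_in (lax_slice B C F Y) (fcomp (slice_functor B C F Y u) g f)
       (bcomp1 (lax_slice B C F Y) (fmor (slice_functor B C F Y u) g) (fmor (slice_functor B C F Y u) f))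
       (fmor (slice_functor B C F Y u) (bcomp1 (lax_slice B C F X) g f))"
  proof (intro allI impI)
    fix g f assume gf: "composable (lax_slice B C F X) g f"
    then have h: "g \<in> sl_homs B C F X" "f \<in> sl_homs B C F X" "sl_src g = sl_trg f"
      unfolding composable_def by auto
    show "cell_in (lax_slice B C F Y) (fcomp (slice_functor B C F Y u) g f)
       (bcomp1 (lax_slice B C F Y) (fmor (slice_functor B C F Y u) g) (fmor (slice_functor B C F Y u) f))
       (fmor (slice_functor B C F Y u) (bcomp1 (lax_slice B C F X) g f))"
      using idcell[OF comp_closed[OF map_mor[OF h(1)] map_mor[OF h(2)]]] map_comp[OF h] h(3)
      unfolding cell_in_def by simp
  qed
  show "\<forall>\<alpha> \<beta>. \<alpha> \<in> bcell (lax_slice B C F X) \<and> \<beta> \<in> bcell (lax_slice B C F X) \<and>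
      bsrc (lax_slice B C F X) (bdom (lax_slice B C F X) \<beta>) = btrg (lax_slice B C F X) (bdom (lax_slice B C F X) \<alpha>) \<longrightarrow>
      bvcomp (lax_slice B C F Y) (fcell (slice_functor B C F Y u) (bhcomp (lax_slice B C F X) \<beta> \<alpha>))
        (fcomp (slice_functor B C F Y u) (bdom (lax_slice B C F X) \<beta>) (bdom (lax_slice B C F X) \<alpha>)) =
      bvcomp (lax_slice B C F Y) (fcomp (slice_functor B C F Y u) (bcod (lax_slice B C F X) \<beta>) (bcod (lax_slice B C F X) \<alpha>))
        (bhcomp (lax_slice B C F Y) (fcell (slice_functor B C F Y u) \<beta>) (fcell (slice_functor B C F Y u) \<alpha>))"
  proof (intro allI impI)
    fix \<alpha>' \<beta>' assume as: "\<alpha>' \<in> bcell (lax_slice B C F X) \<and> \<beta>' \<in> bcell (lax_slice B C F X) \<and>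
      bsrc (lax_slice B C F X) (bdom (lax_slice B C F X) \<beta>') = btrg (lax_slice B C F X) (bdom (lax_slice B C F X) \<alpha>')"
    obtain P0 P1 a where ae: "\<alpha>' = (P0, P1, a)" by (metis prod.exhaust)
    obtain Q0 Q1 b where be: "\<beta>' = (Q0, Q1, b)" by (metis prod.exhaust)
    have ca: "(P0, P1, a) \<in> sl_cells B C F X" and cb: "(Q0, Q1, b) \<in> sl_cells B C F X"
      and st: "sl_src Q0 = sl_trg P0" using as ae be by auto
    note fa = cell_facts[OF ca] and fb = cell_facts[OF cb]
    have st1: "sl_src Q1 = sl_trg P1" using st fa fb by simp
    have eq: "sl_map_mor C F u (sl_comp1 B C F Q1 P1) = sl_comp1 B C F (sl_map_mor C F u Q1) (sl_map_mor C F u P1)"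
      using map_comp[OF fb(2) fa(2) st1] by simp
    have t: "bsrc B (bdom B b) = btrg B (bdom B a)"
      using fa fb st hom_facts[OF fa(1)] hom_facts[OF fb(1)] by simp
    have "bdom B (bhcomp B b a) = bcomp1 B (sl_p Q0) (sl_p P0)" "bcod B (bhcomp B b a) = bcomp1 B (sl_p Q1) (sl_p P1)"
      "bhcomp B b a \<in> bcell B"
      using t fa fb by simp_all
    then show "bvcomp (lax_slice B C F Y) (fcell (slice_functor B C F Y u) (bhcomp (lax_slice B C F X) \<beta>' \<alpha>'))
        (fcomp (slice_functor B C F Y u) (bdom (lax_slice B C F X) \<beta>') (bdom (lax_slice B C F X) \<alpha>')) =
      bvcomp (lax_slice B C F Y) (fcomp (slice_functor B C F Y u) (bcod (lax_slice B C F X) \<beta>') (bcod (lax_slice B C F X) \<alpha>'))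
        (bhcomp (lax_slice B C F Y) (fcell (slice_functor B C F Y u) \<beta>') (fcell (slice_functor B C F Y u) \<alpha>'))"
      unfolding ae be using eq by simp
  qed
  show "\<forall>h g f. composable (lax_slice B C F X) h g \<and> composable (lax_slice B C F X) g f \<longrightarrow>
      bvcomp (lax_slice B C F Y) (fcell (slice_functor B C F Y u) (bassoc (lax_slice B C F X) h g f))
       (bvcomp (lax_slice B C F Y) (fcomp (slice_functor B C F Y u) (bcomp1 (lax_slice B C F X) h g) f)
         (bhcomp (lax_slice B C F Y) (fcomp (slice_functor B C F Y u) h g)
           (bid2 (lax_slice B C F Y) (fmor (slice_functor B C F Y u) f)))) =
      bvcomp (lax_slice B C F Y) (fcomp (slice_functor B C F Y u) h (bcomp1 (lax_slice B C F X) g f))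
       (bvcomp (lax_slice B C F Y)
         (bhcomp (lax_slice B C F Y) (bid2 (lax_slice B C F Y) (fmor (slice_functor B C F Y u) h))
           (fcomp (slice_functor B C F Y u) g f))
         (bassoc (lax_slice B C F Y) (fmor (slice_functor B C F Y u) h) (fmor (slice_functor B C F Y u) g)
           (fmor (slice_functor B C F Y u) f)))"
  proof (intro allI impI)
    fix h g f assume hgf: "composable (lax_slice B C F X) h g \<and> composable (lax_slice B C F X) g f"
    then have hh: "h \<in> sl_homs B C F X" "g \<in> sl_homs B C F X" "f \<in> sl_homs B C F X"
      "sl_src h = sl_trg g" "sl_src g = sl_trg f"
      unfolding composable_def by auto
    note fh = hom_facts[OF hh(1)] and fg = hom_facts[OF hh(2)] and ff = hom_facts[OF hh(3)]
    have gfc: "sl_comp1 B C F g f \<in> sl_homs B C F X" using comp_closed hh by simp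
    have eq: "sl_map_mor C F u (sl_comp1 B C F h (sl_comp1 B C F g f)) =
      sl_comp1 B C F (sl_map_mor C F u h) (sl_map_mor C F u (sl_comp1 B C F g f))"
      using map_comp[OF hh(1) gfc] hh by simp
    show "bvcomp (lax_slice B C F Y) (fcell (slice_functor B C F Y u) (bassoc (lax_slice B C F X) h g f))
       (bvcomp (lax_slice B C F Y) (fcomp (slice_functor B C F Y u) (bcomp1 (lax_slice B C F X) h g) f)
         (bhcomp (lax_slice B C F Y) (fcomp (slice_functor B C F Y u) h g)
           (bid2 (lax_slice B C F Y) (fmor (slice_functor B C F Y u) f)))) =
      bvcomp (lax_slice B C F Y) (fcomp (slice_functor B C F Y u) h (bcomp1 (lax_slice B C F X) g f))
       (bvcomp (lax_slice B C F Y)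
         (bhcomp (lax_slice B C F Y) (bid2 (lax_slice B C F Y) (fmor (slice_functor B C F Y u) h))
           (fcomp (slice_functor B C F Y u) g f))
         (bassoc (lax_slice B C F Y) (fmor (slice_functor B C F Y u) h) (fmor (slice_functor B C F Y u) g)
           (fmor (slice_functor B C F Y u) f)))"
      using eq fh fg ff hh by simp
  qed
  show "\<forall>f\<in>bhom (lax_slice B C F X).
        blunit (lax_slice B C F Y) (fmor (slice_functor B C F Y u) f) =
          bvcomp (lax_slice B C F Y) (fcell (slice_functor B C F Y u) (blunit (lax_slice B C F X) f))
            (bvcomp (lax_slice B C F Y) (fcomp (slice_functor B C F Y u) (bid1 (lax_slice B C F X) (btrg (lax_slice B C F X) f)) f)
              (bhcomp (lax_slice B C F Y) (funit (slice_functor B C F Y u) (btrg (lax_slice B C F X) f))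
                 (bid2 (lax_slice B C F Y) (fmor (slice_functor B C F Y u) f)))) \<and>
        brunit (lax_slice B C F Y) (fmor (slice_functor B C F Y u) f) =
          bvcomp (lax_slice B C F Y) (fcell (slice_functor B C F Y u) (brunit (lax_slice B C F X) f))
            (bvcomp (lax_slice B C F Y) (fcomp (slice_functor B C F Y u) f (bid1 (lax_slice B C F X) (bsrc (lax_slice B C F X) f)))
              (bhcomp (lax_slice B C F Y) (bid2 (lax_slice B C F Y) (fmor (slice_functor B C F Y u) f))
                 (funit (slice_functor B C F Y u) (bsrc (lax_slice B C F X) f))))"
  proof
    fix f assume f: "f \<in> bhom (lax_slice B C F X)"
    then have f': "f \<in> sl_homs B C F X" by simp
    note ff = hom_facts[OF f']
    have o1: "fst (sl_trg f) \<in> bob B" "fst (sl_src f) \<in> bob B" using obs_fst ff by auto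
    have e1: "sl_map_mor C F u (sl_id1 C B F (sl_trg f)) = sl_id1 C B F (sl_map_obj C u (sl_trg f))"
      using map_id ff by simp
    have e2: "sl_map_mor C F u (sl_id1 C B F (sl_src f)) = sl_id1 C B F (sl_map_obj C u (sl_src f))"
      using map_id ff by simp
    have m1: "sl_map_mor C F u (sl_comp1 B C F (sl_id1 C B F (sl_trg f)) f) =
       sl_comp1 B C F (sl_map_mor C F u (sl_id1 C B F (sl_trg f))) (sl_map_mor C F u f)"
      using map_comp[OF id_closed[OF ff(5)] f'] by simp
    have m2: "sl_map_mor C F u (sl_comp1 B C F f (sl_id1 C B F (sl_src f))) =
       sl_comp1 B C F (sl_map_mor C F u f) (sl_map_mor C F u (sl_id1 C B F (sl_src f)))"
      using map_comp[OF f' id_closed[OF ff(4)]] by simp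
    have s: "fst (sl_map_obj C u Af) = fst Af" for Af by (simp add: sl_map_obj_def split: prod.splits)
    show "blunit (lax_slice B C F Y) (fmor (slice_functor B C F Y u) f) =
          bvcomp (lax_slice B C F Y) (fcell (slice_functor B C F Y u) (blunit (lax_slice B C F X) f))
            (bvcomp (lax_slice B C F Y) (fcomp (slice_functor B C F Y u) (bid1 (lax_slice B C F X) (btrg (lax_slice B C F X) f)) f)
              (bhcomp (lax_slice B C F Y) (funit (slice_functor B C F Y u) (btrg (lax_slice B C F X) f))
                 (bid2 (lax_slice B C F Y) (fmor (slice_functor B C F Y u) f)))) \<and>
        brunit (lax_slice B C F Y) (fmor (slice_functor B C F Y u) f) =
          bvcomp (lax_slice B C F Y) (fcell (slice_functor B C F Y u) (brunit (lax_slice B C F X) f))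
            (bvcomp (lax_slice B C F Y) (fcomp (slice_functor B C F Y u) f (bid1 (lax_slice B C F X) (bsrc (lax_slice B C F X) f)))
              (bhcomp (lax_slice B C F Y) (bid2 (lax_slice B C F Y) (fmor (slice_functor B C F Y u) f))
                 (funit (slice_functor B C F Y u) (bsrc (lax_slice B C F X) f))))"
      using ff o1 e1 e2 m1 m2 by (simp add: s)
  qed
  show "\<forall>g f. composable (lax_slice B C F X) g f \<longrightarrow>
       fcomp (slice_functor B C F Y u) g f =
       bid2 (lax_slice B C F Y) (bcomp1 (lax_slice B C F Y) (fmor (slice_functor B C F Y u) g) (fmor (slice_functor B C F Y u) f))"
    by simp
  show "\<forall>A\<in>bob (lax_slice B C F X). funit (slice_functor B C F Y u) A =
       bid2 (lax_slice B C F Y) (bid1 (lax_slice B C F Y) (fobj (slice_functor B C F Y u) A))"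
    by simp
qed

end


theorem proposition3p3:
  fixes B :: "('o, 'a, 'c) bicat"
    and C :: "('o2, 'a2, 'c2) bicat"
    and F :: "('o, 'a, 'c, 'o2, 'a2, 'c2) laxf"
    and u :: 'a2 and X Y :: 'o2
  assumes "bicategory B" and "bicategory C"
    and "lax_functor B C F"
    and "u \<in> bhom C" and "bsrc C u = X" and "btrg C u = Y"
  shows "strict_functor (lax_slice B C F X) (lax_slice B C F Y) (slice_functor B C F Y u)"
proof -
  have "sf B C F u X Y"
    unfolding sf_def sf_axioms_def bc_def using assms by auto
  then show ?thesis by (rule sf.main)
qed

end
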